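(* Let $g,h:[0,1]\to\mathbb{R}$ be standardized, piecewise continuous and strictly monotonic functions. Let $U_0\sim\mathcal{U}(0,1)$, let $F_g$ and $F_h$ denote the distribution functions of $g(U_0)$ and $h(U_0)$, and set $T_g=F_g\circ g$, $T_h=F_h\circ h$. Let $X,Y$ be continuous random variables with distribution functions $F_X,F_Y$, and put $U=F_X(X)$, $V=F_Y(Y)$. Then: (a) The upper bound (maximum over all joint distributions) of $\rho_{\{g,h\}}(X,Y)$ is $$\rho_{\{g,h\}\max}=\int_0^1 F_g^{-1}(u)F_h^{-1}(u)\,\mathrm{d}u,$$ and it is attained when $T_g(U)=T_h(V)$ almost surely. (b) The lower bound (minimum over all joint distributions) of $\rho_{\{g,h\}}(X,Y)$ is $$\rho_{\{g,h\}\min}=\int_0^1 F_g^{-1}(u)F_h^{-1}(1-u)\,\mathrm{d}u,$$ and it is attained when $T_g(U)=1-T_h(V)$ almost surely. (c) The upper bound equals $1$ when $F_g=F_h$, and the lower bound equals $-1$ when $F_h^{-1}(1-u)=-F_g^{-1}(u)$ for all $u\in[0,1]$.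
   Context: $\rho$ denotes Pearson correlation. For continuous random variables $X,Y$ with distribution functions $F_X,F_Y$ and $g,h\in\mathcal{L}^2([0,1])$, the generalized Spearman correlation is $\rho_{\{g,h\}}(X,Y)=\rho\big(g(F_X(X)),h(F_Y(Y))\big)$. A function $\psi\in\mathcal{L}^2([0,1])$ is standardized if $\int_0^1\psi(u)\,\mathrm{d}u=0$ and $\int_0^1\psi^2(u)\,\mathrm{d}u=1$. It is piecewise continuous and strictly monotonic if there is a finite partition $0=u_0<u_1<\dots<u_M=1$ such that for each $m$ the restriction of $\psi$ to $(u_{m-1},u_m)$ is continuous and strictly monotonic (partitions for $g$ and $h$ may differ). For a distribution function $F$, $F^{-1}(u)=\inf\{x\in\mathbb{R}:F(x)\ge u\}$ is the generalized inverse. *)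

theory Defs
  imports "HOL-Probability.Probability"
begin

definition standardized :: "(real \<Rightarrow> real) \<Rightarrow> bool" where
  "standardized \<psi> \<longleftrightarrow>
     set_borel_measurable lborel {0..1} \<psi> \<and>
     set_integrable lborel {0..1} (\<lambda>u. (\<psi> u)\<^sup>2) \<and>
     (LINT u:{0..1}|lborel. \<psi> u) = 0 \<and>
     (LINT u:{0..1}|lborel. (\<psi> u)\<^sup>2) = 1"

definition pw_cont_strict_mono :: "(real \<Rightarrow> real) \<Rightarrow> bool" where
  "pw_cont_strict_mono \<psi> \<longleftrightarrow>
     (\<exists>(K::nat) (u::nat \<Rightarrow> real). u 0 = 0 \<and> u K = 1 \<and>
        (\<forall>m<K. u m < u (Suc m)) \<and>
        (\<forall>m<K. continuous_on {u m<..<u (Suc m)} \<psi> \<and>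
                (strict_mono_on {u m<..<u (Suc m)} \<psi> \<or>
                 strict_antimono_on {u m<..<u (Suc m)} \<psi>)))"

definition unif_dist_fn :: "(real \<Rightarrow> real) \<Rightarrow> real \<Rightarrow> real" where
  "unif_dist_fn \<psi> x = measure lborel {u \<in> {0..1}. \<psi> u \<le> x}"

definition gen_inv :: "(real \<Rightarrow> real) \<Rightarrow> real \<Rightarrow> real" where
  "gen_inv F u = Inf {x. u \<le> F x}"

definition dist_fn :: "'a measure \<Rightarrow> ('a \<Rightarrow> real) \<Rightarrow> real \<Rightarrow> real" where
  "dist_fn M X = cdf (distr M borel X)"

definition continuous_rv :: "'a measure \<Rightarrow> ('a \<Rightarrow> real) \<Rightarrow> bool" where
  "continuous_rv M X \<longleftrightarrow> X \<in> borel_measurable M \<and> (\<forall>x. isCont (dist_fn M X) x)"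

definition pearson :: "'a measure \<Rightarrow> ('a \<Rightarrow> real) \<Rightarrow> ('a \<Rightarrow> real) \<Rightarrow> real" where
  "pearson M A B =
     (let mA = (\<integral>w. A w \<partial>M); mB = (\<integral>w. B w \<partial>M) in
       (\<integral>w. (A w - mA) * (B w - mB) \<partial>M) /
       sqrt ((\<integral>w. (A w - mA)\<^sup>2 \<partial>M) * (\<integral>w. (B w - mB)\<^sup>2 \<partial>M)))"

definition gen_spearman ::
  "(real \<Rightarrow> real) \<Rightarrow> (real \<Rightarrow> real) \<Rightarrow> 'a measure \<Rightarrow> ('a \<Rightarrow> real) \<Rightarrow> ('a \<Rightarrow> real) \<Rightarrow> real" where
  "gen_spearman g h M X Y =
     pearson M (\<lambda>w. g (dist_fn M X (X w))) (\<lambda>w. h (dist_fn M Y (Y w)))"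

end

theory Submission
  imports Defs
begin

definition unif :: "real measure" where
  "unif = density lborel (indicator {0<..<1})"

lemma sets_unif[simp, measurable_cong]: "sets unif = sets borel"
  by (simp add: unif_def)

lemma space_unif[simp]: "space unif = UNIV"
  by (simp add: unif_def)

lemma emeasure_unif: "A \<in> sets borel \<Longrightarrow> emeasure unif A = emeasure lborel (A \<inter> {0<..<1})"
  unfolding unif_def by (subst emeasure_restricted) (auto simp: Int_commute)

lemma prob_space_unif: "prob_space unif"
  by (rule prob_spaceI) (simp add: emeasure_unif)

lemma measure_unif: "A \<in> sets borel \<Longrightarrow> measure unif A = measure lborel (A \<inter> {0<..<1})"
  by (simp add: measure_def emeasure_unif)

lemma AE_unif: "AE x in unif. 0 < x \<and> x < 1"
  unfolding unif_def by (subst AE_density) (auto simp: indicator_def)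

lemma nn_integral_unif:
  "f \<in> borel_measurable borel \<Longrightarrow> (\<integral>\<^sup>+x. f x \<partial>unif) = (\<integral>\<^sup>+x. f x * indicator {0<..<1} x \<partial>lborel)"
  unfolding unif_def by (subst nn_integral_density) (auto simp: mult.commute)

lemma real_distribution_unif: "real_distribution unif"
  unfolding real_distribution_def using prob_space_unif by (auto simp: real_distribution_axioms_def)

lemma cdf_unif: "cdf unif x = max 0 (min 1 x)"
proof -
  have "cdf unif x = measure lborel ({..x} \<inter> {0<..<1})"
    by (simp add: cdf_def measure_unif)
  also have "\<dots> = max 0 (min 1 x)"
  proof (cases "x \<le> 0")
    case True then have "{..x} \<inter> {0<..<1} = {}" by auto
    then show ?thesis using True by simp
  next
    case False
    show ?thesis
    proof (cases "x < 1")
      case True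
      then have "{..x} \<inter> {0<..<1} = {0<..x}" using False by auto
      then show ?thesis using True False by simp
    next
      case False2: False
      then have "{..x} \<inter> {0<..<1} = {0<..<1::real}" by auto
      then show ?thesis using False2 by simp
    qed
  qed
  finally show ?thesis .
qed

lemma cont_cdf_at:
  assumes "real_distribution N" and cont: "\<And>x. isCont (cdf N) x"
    and w: "0 < w" "w < 1"
  shows "measure N {y. cdf N y < w} = w"
proof -
  interpret N: real_distribution N by fact
  interpret R: right_continuous_mono "cdf N" 0 1
    by standard (auto intro: N.cdf_nondecreasing N.cdf_is_right_cont N.cdf_lim_at_top_prob N.cdf_lim_at_bot monoI)
  define I where "I = Inf {x. w \<le> cdf N x}"
  have pi: "\<And>y. w \<le> cdf N y \<longleftrightarrow> I \<le> y" unfolding I_def using R.pseudoinverse w by blast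
  have set: "{y. cdf N y < w} = {..<I}" using pi by (auto simp: not_le[symmetric])
  have "measure N {..<I} = measure N {..I}"
  proof -
    have "{..I} = {..<I} \<union> {I}" by auto
    moreover have "measure N {I} = 0" using N.isCont_cdf cont by blast
    moreover have "measure N ({..<I} \<union> {I}) = measure N {..<I} + measure N {I}"
      by (rule N.finite_measure_Union) auto
    ultimately show ?thesis by simp
  qed
  also have "\<dots> = cdf N I" by (simp add: cdf_def)
  also have "cdf N I = w"
  proof (rule antisym)
    show "w \<le> cdf N I" using pi by simp
    show "cdf N I \<le> w"
    proof (rule ccontr)
      assume "\<not> cdf N I \<le> w"
      then have "w < cdf N I" by simp
      have "(cdf N \<longlongrightarrow> cdf N I) (at_left I)"
        using cont[of I] by (simp add: isCont_def filterlim_at_split)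
      then have "eventually (\<lambda>y. w < cdf N y) (at_left I)"
        using \<open>w < cdf N I\<close> by (rule order_tendstoD)
      moreover have "eventually (\<lambda>y. y < I) (at_left I)"
        by (simp add: eventually_at_left_field) (meson lt_ex)
      ultimately have "eventually (\<lambda>y. w < cdf N y \<and> y < I) (at_left I)"
        by (rule eventually_conj)
      then obtain y where "w < cdf N y" "y < I"
        using eventually_happens trivial_limit_at_left_real by blast
      then show False using pi[of y] by simp
    qed
  qed
  finally show ?thesis using set by simp
qed

lemma cont_cdf_distr:
  assumes "real_distribution N" and cont: "\<And>x. isCont (cdf N) x"
  shows "distr N borel (cdf N) = unif"
proof -
  interpret N: real_distribution N by fact
  have meas: "cdf N \<in> borel_measurable borel"
    by (intro borel_measurable_mono monoI N.cdf_nondecreasing)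
  interpret D: real_distribution "distr N borel (cdf N)"
    using meas by (auto simp: real_distribution_def real_distribution_axioms_def intro!: N.prob_space_distr)
  show ?thesis
  proof (rule cdf_unique)
    show "real_distribution (distr N borel (cdf N))" by (rule D.real_distribution_axioms)
    show "real_distribution unif" by (rule real_distribution_unif)
    show "cdf (distr N borel (cdf N)) = cdf unif"
    proof
    fix x
    have c: "cdf (distr N borel (cdf N)) x = measure N {y. cdf N y \<le> x}"
      using meas by (simp add: cdf_def measure_distr vimage_def)
    have "measure N {y. cdf N y \<le> x} = max 0 (min 1 x)"
    proof (cases "x < 0")
      case True
      then have "{y. cdf N y \<le> x} = {}" using N.cdf_nonneg by (smt (verit) Collect_empty_eq)
      then show ?thesis using True by simp
    next
      case False
      show ?thesis
      proof (cases "1 \<le> x")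
        case True
        then have "{y. cdf N y \<le> x} = UNIV" using N.cdf_bounded_prob by (auto intro: order_trans)
        then show ?thesis using True N.prob_space N.space_eq_univ by simp
      next
        case False2: False
        have m: "{y. cdf N y \<le> x} \<in> sets N" using meas by measurable
        have up: "measure N {y. cdf N y \<le> x} \<le> x"
        proof (rule dense_ge_bounded[of x 1])
          show "x < 1" using False2 by simp
          fix w assume "x < w" "w < 1"
          then have "measure N {y. cdf N y \<le> x} \<le> measure N {y. cdf N y < w}"
            using meas by (intro N.finite_measure_mono) auto
          also have "\<dots> = w" using cont_cdf_at[OF assms] \<open>x < w\<close> \<open>w < 1\<close> False by simp
          finally show "measure N {y. cdf N y \<le> x} \<le> w" .
        qed
        have lo: "x \<le> measure N {y. cdf N y \<le> x}"
        proof (cases "x = 0")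
          case True then show ?thesis by simp
        next
          case False3: False
          have "x = measure N {y. cdf N y < x}" using cont_cdf_at[OF assms, of x] False False2 False3 by simp
          also have "\<dots> \<le> measure N {y. cdf N y \<le> x}"
            using meas by (intro N.finite_measure_mono) auto
          finally show ?thesis .
        qed
        show ?thesis using up lo False False2 by simp
      qed
    qed
    then show "cdf (distr N borel (cdf N)) x = cdf unif x" using c cdf_unif by simp
    qed
  qed
qed

lemma PIT:
  assumes "prob_space M" "X \<in> borel_measurable M" "\<And>x. isCont (dist_fn M X) x"
  shows "distr M borel (\<lambda>w. dist_fn M X (X w)) = unif"
proof -
  interpret M: prob_space M by fact
  let ?N = "distr M borel X"
  have rd: "real_distribution ?N" using assms(2) by simp
  interpret R: real_distribution ?N by (rule rd)
  have meas: "cdf ?N \<in> borel_measurable borel"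
    by (intro borel_measurable_mono monoI R.cdf_nondecreasing)
  have "distr M borel (\<lambda>w. dist_fn M X (X w)) = distr ?N borel (cdf ?N)"
    using meas assms(2) by (simp add: distr_distr dist_fn_def comp_def)
  also have "\<dots> = unif" using cont_cdf_distr[OF rd] assms(3) by (simp add: dist_fn_def)
  finally show ?thesis .
qed

lemma pw_level_finite:
  assumes "pw_cont_strict_mono g"
  shows "finite {v\<in>{0..1}. g v = x}"
proof -
  obtain K u where u0: "u 0 = 0" and uK: "u K = 1" and
    pieces: "\<forall>m<K. continuous_on {u m<..<u (Suc m)} g \<and>
                (strict_mono_on {u m<..<u (Suc m)} g \<or> strict_antimono_on {u m<..<u (Suc m)} g)"
    using assms unfolding pw_cont_strict_mono_def by blast
  have sub: "{v\<in>{0..1}. g v = x} \<subseteq> u ` {..K} \<union> (\<Union>m<K. {v\<in>{u m<..<u (Suc m)}. g v = x})"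
  proof
    fix v assume v: "v \<in> {v\<in>{0..1}. g v = x}"
    show "v \<in> u ` {..K} \<union> (\<Union>m<K. {v\<in>{u m<..<u (Suc m)}. g v = x})"
    proof (cases "v \<in> u ` {..K}")
      case True then show ?thesis by blast
    next
      case False
      define S where "S = {m. m \<le> K \<and> u m \<le> v}"
      have "0 \<in> S" using u0 v by (auto simp: S_def)
      have fin: "finite S" unfolding S_def by auto
      define m where "m = Max S"
      have mS: "m \<in> S" unfolding m_def using fin \<open>0 \<in> S\<close> by (intro Max_in) auto
      have "m \<noteq> K" using mS uK v False by (auto simp: S_def)
      then have mK: "m < K" using mS by (auto simp: S_def)
      have "Suc m \<notin> S"
      proof
        assume "Suc m \<in> S"
        then have "Suc m \<le> m" unfolding m_def using Max_ge[OF fin] by blast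
        then show False by simp
      qed
      moreover have "Suc m \<le> K" using mK by simp
      ultimately have "v < u (Suc m)" unfolding S_def by (simp add: not_le)
      moreover have "u m \<le> v" using mS by (simp add: S_def)
      moreover have "u m \<noteq> v" using False mK by force
      ultimately have "u m < v \<and> v < u (Suc m)" by simp
      then have "v \<in> {v\<in>{u m<..<u (Suc m)}. g v = x}" using v by simp
      then have "v \<in> (\<Union>m<K. {v\<in>{u m<..<u (Suc m)}. g v = x})" using mK by blast
      then show ?thesis by (rule UnI2)
    qed
  qed
  have "finite {v\<in>{u m<..<u (Suc m)}. g v = x}" if "m < K" for m
  proof -
    have inj: "inj_on g {u m<..<u (Suc m)}"
    proof -
      from pieces that consider
        (a) "strict_mono_on {u m<..<u (Suc m)} g" | (b) "strict_antimono_on {u m<..<u (Suc m)} g" by blast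
      then show ?thesis
      proof cases
        case a then show ?thesis by (rule strict_mono_on_imp_inj_on)
      next
        case b
        show ?thesis
        proof (rule inj_onI)
          fix a c assume ac: "a \<in> {u m<..<u (Suc m)}" "c \<in> {u m<..<u (Suc m)}" "g a = g c"
          show "a = c"
          proof (rule ccontr)
            assume "a \<noteq> c"
            then consider "a < c" | "c < a" by linarith
            then show False
            proof cases
              case 1
              then have "g c < g a" using b ac(1,2) unfolding monotone_on_def by blast
              then show False using ac(3) by simp
            next
              case 2
              then have "g a < g c" using b ac(1,2) unfolding monotone_on_def by blast
              then show False using ac(3) by simp
            qed
          qed
        qed
      qed
    qed
    show ?thesis
    proof (cases "\<exists>a\<in>{u m<..<u (Suc m)}. g a = x")
      case True
      then obtain a where a: "a \<in> {u m<..<u (Suc m)}" "g a = x" by blast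
      have "{v\<in>{u m<..<u (Suc m)}. g v = x} \<subseteq> {a}"
      proof
        fix v assume v: "v \<in> {v\<in>{u m<..<u (Suc m)}. g v = x}"
        then have "v \<in> {u m<..<u (Suc m)}" "g v = g a" using a by auto
        then have "v = a" using inj_onD[OF inj _ _ a(1)] by blast
        then show "v \<in> {a}" by simp
      qed
      then show ?thesis by (rule finite_subset) simp
    next
      case False
      then have "{v\<in>{u m<..<u (Suc m)}. g v = x} = {}" by blast
      then show ?thesis by (metis finite.emptyI)
    qed
  qed
  then have "finite (u ` {..K} \<union> (\<Union>m<K. {v\<in>{u m<..<u (Suc m)}. g v = x}))" by auto
  then show ?thesis using sub finite_subset by blast
qed


definition trunc :: "(real \<Rightarrow> real) \<Rightarrow> real \<Rightarrow> real" where
  "trunc g x = indicator {0..1} x * g x"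

lemma trunc_eq: "x \<in> {0..1} \<Longrightarrow> trunc g x = g x"
  by (simp add: trunc_def)

lemma trunc_meas: "standardized g \<Longrightarrow> trunc g \<in> borel_measurable borel"
  unfolding standardized_def set_borel_measurable_def trunc_def
  by (simp add: measurable_lborel1)

definition law :: "(real \<Rightarrow> real) \<Rightarrow> real measure" where
  "law g = distr unif borel (trunc g)"

lemma real_distribution_law: "standardized g \<Longrightarrow> real_distribution (law g)"
  unfolding law_def using prob_space_unif trunc_meas[of g]
  by (auto simp: real_distribution_def real_distribution_axioms_def intro!: prob_space.prob_space_distr)

lemma AE_lborel_ne01: "AE u in lborel. u \<noteq> 0 \<and> u \<noteq> 1"
  using AE_lborel_singleton[of 0] AE_lborel_singleton[of 1] by eventually_elim auto

lemma cdf_law: assumes "standardized g" shows "cdf (law g) = unif_dist_fn g"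
proof
  fix x
  have m[measurable]: "trunc g \<in> borel_measurable borel" using assms(1) by (rule trunc_meas)
  have "cdf (law g) x = measure unif {u. trunc g u \<le> x}"
    using m by (simp add: cdf_def law_def measure_distr vimage_def)
  also have "\<dots> = measure lborel ({u. trunc g u \<le> x} \<inter> {0<..<1})"
    using m by (subst measure_unif) auto
  also have "\<dots> = measure lborel ({u. trunc g u \<le> x} \<inter> {0..1})"
    using m AE_lborel_ne01 by (intro measure_eq_AE) (auto elim!: eventually_mono)
  also have "{u. trunc g u \<le> x} \<inter> {0..1} = {u\<in>{0..1}. g u \<le> x}"
    by (auto simp: trunc_eq)
  finally show "cdf (law g) x = unif_dist_fn g x" by (simp add: unif_dist_fn_def)
qed

lemma cont_law:
  assumes "standardized g" "pw_cont_strict_mono g"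
  shows "isCont (cdf (law g)) x"
proof -
  interpret R: real_distribution "law g" using real_distribution_law[OF assms(1)] .
  have m[measurable]: "trunc g \<in> borel_measurable borel" using assms(1) by (rule trunc_meas)
  have "measure (law g) {x} = measure lborel ({u. trunc g u = x} \<inter> {0<..<1})"
    using m by (simp add: law_def measure_distr vimage_def measure_unif)
  also have "\<dots> = 0"
  proof -
    have "{u. trunc g u = x} \<inter> {0<..<1} \<subseteq> {v\<in>{0..1}. g v = x}" by (auto simp: trunc_eq)
    then have "finite ({u. trunc g u = x} \<inter> {0<..<1})"
      using pw_level_finite[OF assms(2)] finite_subset by blast
    then have "{u. trunc g u = x} \<inter> {0<..<1} \<in> null_sets lborel" by (rule finite_imp_null_set_lborel)
    then show ?thesis by (simp add: measure_def null_sets_def)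
  qed
  finally show ?thesis using R.isCont_cdf by blast
qed


definition qf :: "(real \<Rightarrow> real) \<Rightarrow> real \<Rightarrow> real" where
  "qf F w = (if w \<in> {0<..<1} then gen_inv F w else 0)"

context real_distribution
begin

interpretation R: right_continuous_mono "cdf M" 0 1
  by standard (auto intro: cdf_nondecreasing cdf_is_right_cont cdf_lim_at_top_prob cdf_lim_at_bot monoI)

lemma qf_pseudo: "0 < w \<Longrightarrow> w < 1 \<Longrightarrow> qf (cdf M) w \<le> x \<longleftrightarrow> w \<le> cdf M x"
proof -
  assume w: "0 < w" "w < 1"
  have "qf (cdf M) w = Inf {x. w \<le> cdf M x}" using w by (simp add: qf_def gen_inv_def)
  then show ?thesis using R.pseudoinverse[OF w, of x] by simp
qed

lemma qf_mono: "mono_on {0<..<1} (qf (cdf M))"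
  using R.mono_I unfolding mono_on_def qf_def gen_inv_def by auto

lemma qf_meas[measurable]: "qf (cdf M) \<in> borel_measurable borel"
proof -
  have "(\<lambda>w. gen_inv (cdf M) w) \<in> borel_measurable (restrict_space borel {0<..<1})"
    unfolding gen_inv_def by (intro borel_measurable_mono_on_fnc R.mono_I)
  then show ?thesis unfolding qf_def
    using measurable_restrict_space_iff[of "{0<..<1}" borel 0 borel "gen_inv (cdf M)"] by simp
qed

lemma distr_qf: "distr unif borel (qf (cdf M)) = M"
proof (rule cdf_unique)
  show "real_distribution (distr unif borel (qf (cdf M)))"
    using prob_space_unif by (auto simp: real_distribution_def real_distribution_axioms_def intro!: prob_space.prob_space_distr)
  show "real_distribution M" by (rule real_distribution_axioms)
  show "cdf (distr unif borel (qf (cdf M))) = cdf M"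
  proof
    fix x
    have "cdf (distr unif borel (qf (cdf M))) x = measure unif {w. qf (cdf M) w \<le> x}"
    proof -
      have qm: "qf (cdf M) \<in> borel_measurable unif"
        using qf_meas by (simp add: measurable_cong_sets[OF sets_unif refl])
      show ?thesis by (subst cdf_def) (simp add: measure_distr[OF qm] vimage_def)
    qed
    also have "\<dots> = measure lborel ({w. qf (cdf M) w \<le> x} \<inter> {0<..<1})"
      by (subst measure_unif) auto
    also have "{w. qf (cdf M) w \<le> x} \<inter> {0<..<1} = {0<..<1} \<inter> {..cdf M x}"
      using qf_pseudo by auto
    also have "measure lborel ({0<..<1} \<inter> {..cdf M x}) = cdf M x"
    proof (cases "cdf M x < 1")
      case True
      then have "{0<..<1} \<inter> {..cdf M x} = {0<..cdf M x}" by auto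
      then show ?thesis using cdf_nonneg[of x] by simp
    next
      case False
      then have "cdf M x = 1" using cdf_bounded_prob[of x] by simp
      moreover have "{0<..<1} \<inter> {..1::real} = {0<..<1}" by auto
      ultimately show ?thesis by simp
    qed
    finally show "cdf (distr unif borel (qf (cdf M))) x = cdf M x" .
  qed
qed

end


lemma same_law_le_AE:
  fixes X Y :: "'a \<Rightarrow> real"
  assumes "prob_space M" and X[measurable]: "X \<in> borel_measurable M" and Y[measurable]: "Y \<in> borel_measurable M"
    and law: "distr M borel X = distr M borel Y" and le: "AE w in M. X w \<le> Y w"
  shows "AE w in M. X w = Y w"
proof -
  interpret prob_space M by fact
  have q: "AE w in M. X w \<le> real_of_rat q \<longrightarrow> Y w \<le> real_of_rat q" for q
  proof -
    define a where "a = real_of_rat q"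
    define E1 where "E1 = {w\<in>space M. X w \<le> a}"
    define E2 where "E2 = {w\<in>space M. Y w \<le> a}"
    have s: "E1 \<in> sets M" "E2 \<in> sets M" unfolding E1_def E2_def by measurable
    have "prob E1 = measure (distr M borel X) {..a}"
      by (simp add: measure_distr E1_def vimage_def Int_def conj_commute)
    also have "\<dots> = measure (distr M borel Y) {..a}" by (simp add: law)
    also have "\<dots> = prob E2"
      by (simp add: measure_distr E2_def vimage_def Int_def conj_commute)
    finally have p12: "prob E1 = prob E2" .
    have "prob (E1 \<inter> E2) = prob E2"
      using le s by (intro measure_eq_AE) (auto simp: E1_def E2_def elim!: eventually_mono)
    moreover have "prob E1 = prob (E1 \<inter> E2) + prob (E1 - E2)"
      using s by (subst finite_measure_Union[symmetric]) (auto intro!: arg_cong[where f=prob])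
    ultimately have "prob (E1 - E2) = 0" using p12 by simp
    then have "E1 - E2 \<in> null_sets M" using s by (auto simp: emeasure_eq_measure intro!: null_setsI)
    then have "AE w in M. w \<notin> E1 - E2" using AE_not_in by blast
    then show ?thesis
      by (auto simp: E1_def E2_def a_def elim!: eventually_mono)
  qed
  have "AE w in M. \<forall>q. X w \<le> real_of_rat q \<longrightarrow> Y w \<le> real_of_rat q"
    using q by (subst AE_all_countable) auto
  with le show ?thesis
  proof eventually_elim
    case (elim w)
    show ?case
    proof (rule ccontr)
      assume "X w \<noteq> Y w"
      then have "X w < Y w" using elim by simp
      then obtain q where "X w < real_of_rat q" "real_of_rat q < Y w" using of_rat_dense by blast
      then have "X w \<le> real_of_rat q" by simp
      then have "Y w \<le> real_of_rat q" using elim by blast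
      then show False using \<open>real_of_rat q < Y w\<close> by simp
    qed
  qed
qed

lemma qf_cdf_AE:
  assumes "prob_space M" and A[measurable]: "A \<in> borel_measurable M" and cont: "\<And>x. isCont (dist_fn M A) x"
  shows "AE w in M. qf (dist_fn M A) (dist_fn M A (A w)) = A w"
proof -
  interpret prob_space M by fact
  let ?N = "distr M borel A"
  interpret N: real_distribution ?N by simp
  have F: "dist_fn M A = cdf ?N" by (simp add: dist_fn_def)
  have Fm[measurable]: "cdf ?N \<in> borel_measurable borel"
    by (intro borel_measurable_mono monoI N.cdf_nondecreasing)
  have pit: "distr M borel (\<lambda>w. cdf ?N (A w)) = unif" using PIT[OF assms(1,2) cont] by (simp add: F)
  have "AE x in distr M borel (\<lambda>w. cdf ?N (A w)). 0 < x \<and> x < 1" unfolding pit by (rule AE_unif)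
  then have in01: "AE w in M. 0 < cdf ?N (A w) \<and> cdf ?N (A w) < 1"
    by (subst (asm) AE_distr_iff) auto
  have le: "AE w in M. qf (cdf ?N) (cdf ?N (A w)) \<le> A w"
    using in01 by eventually_elim (simp add: N.qf_pseudo)
  have "distr M borel (\<lambda>w. qf (cdf ?N) (cdf ?N (A w))) = distr (distr M borel (\<lambda>w. cdf ?N (A w))) borel (qf (cdf ?N))"
    by (subst distr_distr) (auto simp: comp_def)
  also have "\<dots> = ?N" using pit N.distr_qf by simp
  finally have "distr M borel (\<lambda>w. qf (cdf ?N) (cdf ?N (A w))) = distr M borel A" .
  from same_law_le_AE[OF assms(1) _ A this le] show ?thesis by (simp add: F)
qed

lemma AE_W01:
  assumes "prob_space M" and W[measurable]: "W \<in> borel_measurable M" and dW: "distr M borel W = unif"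
  shows "AE \<omega> in M. 0 < W \<omega> \<and> W \<omega> < 1"
proof -
  have "AE x in distr M borel W. 0 < x \<and> x < 1" unfolding dW by (rule AE_unif)
  then show ?thesis by (subst (asm) AE_distr_iff) auto
qed

lemma nn_integral_W:
  assumes W[measurable]: "W \<in> borel_measurable M" and dW: "distr M borel W = unif"
    and h[measurable]: "h \<in> borel_measurable borel"
  shows "(\<integral>\<^sup>+\<omega>. h (W \<omega>) \<partial>M) = (\<integral>\<^sup>+x. h x \<partial>unif)"
proof -
  have "(\<integral>\<^sup>+x. h x \<partial>unif) = (\<integral>\<^sup>+x. h x \<partial>distr M borel W)" by (simp add: dW)
  also have "\<dots> = (\<integral>\<^sup>+\<omega>. h (W \<omega>) \<partial>M)" by (simp add: nn_integral_distr)
  finally show ?thesis by simp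
qed

lemma emeasure_W:
  assumes W[measurable]: "W \<in> borel_measurable M" and dW: "distr M borel W = unif"
    and S[measurable]: "S \<in> sets borel"
  shows "emeasure M {\<omega>\<in>space M. W \<omega> \<in> S} = emeasure unif S"
proof -
  have "emeasure unif S = emeasure (distr M borel W) S" by (simp add: dW)
  also have "\<dots> = emeasure M (W -` S \<inter> space M)" by (simp add: emeasure_distr)
  finally show ?thesis by (simp add: vimage_def Int_def conj_commute)
qed

lemma bathtub_le:
  assumes "prob_space M" and W[measurable]: "W \<in> borel_measurable M" and dW: "distr M borel W = unif"
    and E[measurable]: "E \<in> sets M" and S[measurable]: "S \<in> sets borel"
    and pE: "emeasure M E = emeasure unif S"
    and f[measurable]: "f \<in> borel_measurable borel"
    and kS: "\<And>w. w \<in> S \<Longrightarrow> 0 < w \<Longrightarrow> w < 1 \<Longrightarrow> k \<le> f w"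
    and kC: "\<And>w. 0 < w \<Longrightarrow> w < 1 \<Longrightarrow> w \<notin> S \<Longrightarrow> f w \<le> k"
  shows "(\<integral>\<^sup>+\<omega>. ennreal (f (W \<omega>)) * indicator E \<omega> \<partial>M) \<le> (\<integral>\<^sup>+w. ennreal (f w) * indicator S w \<partial>unif)"
proof -
  interpret prob_space M by fact
  interpret U: prob_space unif by (rule prob_space_unif)
  have in01: "AE \<omega> in M. 0 < W \<omega> \<and> W \<omega> < 1" by (rule AE_W01[OF assms(1) W dW])
  have pt: "AE \<omega> in M. ennreal k * indicator S (W \<omega>) + ennreal (f (W \<omega>)) * indicator E \<omega>
      \<le> ennreal k * indicator E \<omega> + ennreal (f (W \<omega>)) * indicator S (W \<omega>)"
    using in01
  proof eventually_elim
    case (elim \<omega>)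
    show ?case
      using kS[of "W \<omega>"] kC[of "W \<omega>"] elim
      by (cases "\<omega> \<in> E"; cases "W \<omega> \<in> S") (auto intro: ennreal_leI)
  qed
  have iS: "(\<integral>\<^sup>+\<omega>. indicator S (W \<omega>) \<partial>M) = emeasure unif S"
    using nn_integral_W[OF W dW, of "indicator S"] by simp
  have ifS: "(\<integral>\<^sup>+\<omega>. ennreal (f (W \<omega>)) * indicator S (W \<omega>) \<partial>M) = (\<integral>\<^sup>+w. ennreal (f w) * indicator S w \<partial>unif)"
    using nn_integral_W[OF W dW, of "\<lambda>w. ennreal (f w) * indicator S w"] by simp
  have "ennreal k * emeasure unif S + (\<integral>\<^sup>+\<omega>. ennreal (f (W \<omega>)) * indicator E \<omega> \<partial>M)
      = (\<integral>\<^sup>+\<omega>. ennreal k * indicator S (W \<omega>) + ennreal (f (W \<omega>)) * indicator E \<omega> \<partial>M)"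
    by (subst nn_integral_add) (auto simp: nn_integral_cmult iS)
  also have "\<dots> \<le> (\<integral>\<^sup>+\<omega>. ennreal k * indicator E \<omega> + ennreal (f (W \<omega>)) * indicator S (W \<omega>) \<partial>M)"
    by (rule nn_integral_mono_AE[OF pt])
  also have "\<dots> = ennreal k * emeasure unif S + (\<integral>\<^sup>+w. ennreal (f w) * indicator S w \<partial>unif)"
    by (subst nn_integral_add) (auto simp: nn_integral_cmult ifS pE)
  finally show ?thesis
    using U.emeasure_finite[of S] by (simp add: ennreal_add_left_cancel_le ennreal_mult_eq_top_iff)
qed

lemma bathtub_ge:
  assumes "prob_space M" and W[measurable]: "W \<in> borel_measurable M" and dW: "distr M borel W = unif"
    and E[measurable]: "E \<in> sets M" and S[measurable]: "S \<in> sets borel"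
    and pE: "emeasure M E = emeasure unif S"
    and f[measurable]: "f \<in> borel_measurable borel"
    and kS: "\<And>w. w \<in> S \<Longrightarrow> 0 < w \<Longrightarrow> w < 1 \<Longrightarrow> f w \<le> k"
    and kC: "\<And>w. 0 < w \<Longrightarrow> w < 1 \<Longrightarrow> w \<notin> S \<Longrightarrow> k \<le> f w"
  shows "(\<integral>\<^sup>+w. ennreal (f w) * indicator S w \<partial>unif) \<le> (\<integral>\<^sup>+\<omega>. ennreal (f (W \<omega>)) * indicator E \<omega> \<partial>M)"
proof -
  interpret prob_space M by fact
  interpret U: prob_space unif by (rule prob_space_unif)
  have in01: "AE \<omega> in M. 0 < W \<omega> \<and> W \<omega> < 1" by (rule AE_W01[OF assms(1) W dW])
  have pt: "AE \<omega> in M. ennreal k * indicator E \<omega> + ennreal (f (W \<omega>)) * indicator S (W \<omega>)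
      \<le> ennreal k * indicator S (W \<omega>) + ennreal (f (W \<omega>)) * indicator E \<omega>"
    using in01
  proof eventually_elim
    case (elim \<omega>)
    show ?case
      using kS[of "W \<omega>"] kC[of "W \<omega>"] elim
      by (cases "\<omega> \<in> E"; cases "W \<omega> \<in> S") (auto intro: ennreal_leI)
  qed
  have iS: "(\<integral>\<^sup>+\<omega>. indicator S (W \<omega>) \<partial>M) = emeasure unif S"
    using nn_integral_W[OF W dW, of "indicator S"] by simp
  have ifS: "(\<integral>\<^sup>+\<omega>. ennreal (f (W \<omega>)) * indicator S (W \<omega>) \<partial>M) = (\<integral>\<^sup>+w. ennreal (f w) * indicator S w \<partial>unif)"
    using nn_integral_W[OF W dW, of "\<lambda>w. ennreal (f w) * indicator S w"] by simp
  have "ennreal k * emeasure unif S + (\<integral>\<^sup>+w. ennreal (f w) * indicator S w \<partial>unif)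
      = (\<integral>\<^sup>+\<omega>. ennreal k * indicator E \<omega> + ennreal (f (W \<omega>)) * indicator S (W \<omega>) \<partial>M)"
    by (subst nn_integral_add) (auto simp: nn_integral_cmult ifS pE)
  also have "\<dots> \<le> (\<integral>\<^sup>+\<omega>. ennreal k * indicator S (W \<omega>) + ennreal (f (W \<omega>)) * indicator E \<omega> \<partial>M)"
    by (rule nn_integral_mono_AE[OF pt])
  also have "\<dots> = ennreal k * emeasure unif S + (\<integral>\<^sup>+\<omega>. ennreal (f (W \<omega>)) * indicator E \<omega> \<partial>M)"
    by (subst nn_integral_add) (auto simp: nn_integral_cmult iS)
  finally show ?thesis
    using U.emeasure_finite[of S] by (simp add: ennreal_add_left_cancel_le ennreal_mult_eq_top_iff)
qed


lemma layer_cake_pt: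
  assumes "0 \<le> c"
  shows "(\<integral>\<^sup>+t. (if 0 \<le> t \<and> t < c then ennreal a else 0) \<partial>lborel) = ennreal a * ennreal c"
proof -
  have "(\<integral>\<^sup>+t. (if 0 \<le> t \<and> t < c then ennreal a else 0) \<partial>lborel) = (\<integral>\<^sup>+t. ennreal a * indicator {0..<c} t \<partial>lborel)"
    by (intro nn_integral_cong) (auto simp: indicator_def)
  also have "\<dots> = ennreal a * emeasure lborel {0..<c}" by (simp add: nn_integral_cmult_indicator)
  also have "\<dots> = ennreal a * ennreal c" using assms by simp
  finally show ?thesis .
qed

lemma layer_cake_swap:
  assumes "sigma_finite_measure N" and f[measurable]: "f \<in> borel_measurable N" and g[measurable]: "g \<in> borel_measurable N"
    and fnn: "\<And>x. 0 \<le> f x" and gnn: "\<And>x. 0 \<le> g x"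
  shows "(\<integral>\<^sup>+x. ennreal (f x * g x) \<partial>N) =
    (\<integral>\<^sup>+t. (\<integral>\<^sup>+x. (if 0 \<le> t \<and> t < g x then ennreal (f x) else 0) \<partial>N) \<partial>lborel)"
proof -
  interpret pair_sigma_finite N lborel
    using assms(1) by (intro pair_sigma_finite.intro) (auto intro: lborel.sigma_finite_measure_axioms)
  have "(\<integral>\<^sup>+x. ennreal (f x * g x) \<partial>N) = (\<integral>\<^sup>+x. (\<integral>\<^sup>+t. (if 0 \<le> t \<and> t < g x then ennreal (f x) else 0) \<partial>lborel) \<partial>N)"
    using fnn gnn by (intro nn_integral_cong) (simp add: layer_cake_pt ennreal_mult)
  also have "\<dots> = (\<integral>\<^sup>+t. (\<integral>\<^sup>+x. (if 0 \<le> t \<and> t < g x then ennreal (f x) else 0) \<partial>N) \<partial>lborel)"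
  proof (rule Fubini'[symmetric])
    show "(\<lambda>(x, t). if 0 \<le> t \<and> t < g x then ennreal (f x) else 0) \<in> borel_measurable (N \<Otimes>\<^sub>M lborel)"
      by measurable
  qed
  finally show ?thesis .
qed

lemma rearr_nn_le:
  assumes "prob_space M" and W[measurable]: "W \<in> borel_measurable M" and dW: "distr M borel W = unif"
    and W'[measurable]: "W' \<in> borel_measurable M" and dW': "distr M borel W' = unif"
    and f[measurable]: "f \<in> borel_measurable borel" and g[measurable]: "g \<in> borel_measurable borel"
    and fnn: "\<And>x. 0 \<le> f x" and gnn: "\<And>x. 0 \<le> g x"
    and sim: "\<And>w w'. 0 < w \<Longrightarrow> w < 1 \<Longrightarrow> 0 < w' \<Longrightarrow> w' < 1 \<Longrightarrow> g w < g w' \<Longrightarrow> f w \<le> f w'"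
  shows "(\<integral>\<^sup>+\<omega>. ennreal (f (W \<omega>) * g (W' \<omega>)) \<partial>M) \<le> (\<integral>\<^sup>+w. ennreal (f w * g w) \<partial>unif)"
proof -
  interpret prob_space M by fact
  interpret U: prob_space unif by (rule prob_space_unif)
  have "(\<integral>\<^sup>+\<omega>. ennreal (f (W \<omega>) * g (W' \<omega>)) \<partial>M) =
    (\<integral>\<^sup>+t. (\<integral>\<^sup>+\<omega>. (if 0 \<le> t \<and> t < g (W' \<omega>) then ennreal (f (W \<omega>)) else 0) \<partial>M) \<partial>lborel)"
    using layer_cake_swap[of M "\<lambda>\<omega>. f (W \<omega>)" "\<lambda>\<omega>. g (W' \<omega>)"] fnn gnn
    by (simp add: sigma_finite_measure_axioms)
  also have "\<dots> \<le> (\<integral>\<^sup>+t. (\<integral>\<^sup>+w. (if 0 \<le> t \<and> t < g w then ennreal (f w) else 0) \<partial>unif) \<partial>lborel)"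
  proof (intro nn_integral_mono)
    fix t
    show "(\<integral>\<^sup>+\<omega>. (if 0 \<le> t \<and> t < g (W' \<omega>) then ennreal (f (W \<omega>)) else 0) \<partial>M)
        \<le> (\<integral>\<^sup>+w. (if 0 \<le> t \<and> t < g w then ennreal (f w) else 0) \<partial>unif)"
    proof (cases "0 \<le> t")
      case False then show ?thesis by simp
    next
      case True
      define E where "E = {\<omega>\<in>space M. W' \<omega> \<in> {w. t < g w}}"
      define S where "S = {w. t < g w}"
      have E[measurable]: "E \<in> sets M" unfolding E_def by measurable
      have S[measurable]: "S \<in> sets borel" unfolding S_def by measurable
      have pE: "emeasure M E = emeasure unif S" unfolding E_def S_def
        by (rule emeasure_W[OF W' dW']) measurable
      have l: "(\<integral>\<^sup>+\<omega>. (if 0 \<le> t \<and> t < g (W' \<omega>) then ennreal (f (W \<omega>)) else 0) \<partial>M)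
          = (\<integral>\<^sup>+\<omega>. ennreal (f (W \<omega>)) * indicator E \<omega> \<partial>M)"
        using True by (intro nn_integral_cong) (auto simp: E_def indicator_def)
      have r: "(\<integral>\<^sup>+w. (if 0 \<le> t \<and> t < g w then ennreal (f w) else 0) \<partial>unif)
          = (\<integral>\<^sup>+w. ennreal (f w) * indicator S w \<partial>unif)"
        using True by (intro nn_integral_cong) (auto simp: S_def indicator_def)
      show ?thesis
      proof (cases "S \<inter> {0<..<1} = {}")
        case True
        then have "emeasure unif S = 0" by (simp add: emeasure_unif)
        then have "E \<in> null_sets M" using pE by (auto intro: null_setsI)
        then have "AE \<omega> in M. \<omega> \<notin> E" using AE_not_in by blast
        then have "(\<integral>\<^sup>+\<omega>. ennreal (f (W \<omega>)) * indicator E \<omega> \<partial>M) = 0"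
          by (subst nn_integral_cong_AE[where v="\<lambda>_. 0"]) (auto elim!: eventually_mono)
        then show ?thesis using l by simp
      next
        case False
        define k where "k = Inf (f ` (S \<inter> {0<..<1}))"
        have bdd: "bdd_below (f ` (S \<inter> {0<..<1}))" using fnn by (intro bdd_belowI[of _ 0]) auto
        have kS: "k \<le> f w" if "w \<in> S" "0 < w" "w < 1" for w
          unfolding k_def using that bdd by (intro cInf_lower) auto
        have kC: "f w \<le> k" if "0 < w" "w < 1" "w \<notin> S" for w
          unfolding k_def
        proof (rule cInf_greatest)
          show "f ` (S \<inter> {0<..<1}) \<noteq> {}" using False by blast
          fix y assume "y \<in> f ` (S \<inter> {0<..<1})"
          then obtain s where s: "s \<in> S" "0 < s" "s < 1" "y = f s" by auto
          have "g w < g s" using that(3) s(1) by (simp add: S_def)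
          then show "f w \<le> y" using sim[of w s] that s by simp
        qed
        have "(\<integral>\<^sup>+\<omega>. ennreal (f (W \<omega>)) * indicator E \<omega> \<partial>M) \<le> (\<integral>\<^sup>+w. ennreal (f w) * indicator S w \<partial>unif)"
          by (rule bathtub_le[OF assms(1) W dW E S pE f, of k]) (auto intro: kS kC)
        then show ?thesis using l r by simp
      qed
    qed
  qed
  also have "\<dots> = (\<integral>\<^sup>+w. ennreal (f w * g w) \<partial>unif)"
    using layer_cake_swap[of unif f g] fnn gnn
    by (simp add: U.sigma_finite_measure_axioms)
  finally show ?thesis .
qed

lemma rearr_nn_ge:
  assumes "prob_space M" and W[measurable]: "W \<in> borel_measurable M" and dW: "distr M borel W = unif"
    and W'[measurable]: "W' \<in> borel_measurable M" and dW': "distr M borel W' = unif"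
    and f[measurable]: "f \<in> borel_measurable borel" and g[measurable]: "g \<in> borel_measurable borel"
    and fnn: "\<And>x. 0 \<le> f x" and gnn: "\<And>x. 0 \<le> g x"
    and anti: "\<And>w w'. 0 < w \<Longrightarrow> w < 1 \<Longrightarrow> 0 < w' \<Longrightarrow> w' < 1 \<Longrightarrow> g w < g w' \<Longrightarrow> f w' \<le> f w"
  shows "(\<integral>\<^sup>+w. ennreal (f w * g w) \<partial>unif) \<le> (\<integral>\<^sup>+\<omega>. ennreal (f (W \<omega>) * g (W' \<omega>)) \<partial>M)"
proof -
  interpret prob_space M by fact
  interpret U: prob_space unif by (rule prob_space_unif)
  have "(\<integral>\<^sup>+w. ennreal (f w * g w) \<partial>unif) = (\<integral>\<^sup>+t. (\<integral>\<^sup>+w. (if 0 \<le> t \<and> t < g w then ennreal (f w) else 0) \<partial>unif) \<partial>lborel)"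
    using layer_cake_swap[of unif f g] fnn gnn
    by (simp add: U.sigma_finite_measure_axioms)
  also have "\<dots> \<le> (\<integral>\<^sup>+t. (\<integral>\<^sup>+\<omega>. (if 0 \<le> t \<and> t < g (W' \<omega>) then ennreal (f (W \<omega>)) else 0) \<partial>M) \<partial>lborel)"
  proof (intro nn_integral_mono)
    fix t
    show "(\<integral>\<^sup>+w. (if 0 \<le> t \<and> t < g w then ennreal (f w) else 0) \<partial>unif) \<le>
        (\<integral>\<^sup>+\<omega>. (if 0 \<le> t \<and> t < g (W' \<omega>) then ennreal (f (W \<omega>)) else 0) \<partial>M)"
    proof (cases "0 \<le> t")
      case False then show ?thesis by simp
    next
      case True
      define E where "E = {\<omega>\<in>space M. W' \<omega> \<in> {w. t < g w}}"
      define S where "S = {w. t < g w}"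
      have E[measurable]: "E \<in> sets M" unfolding E_def by measurable
      have S[measurable]: "S \<in> sets borel" unfolding S_def by measurable
      have pE: "emeasure M E = emeasure unif S" unfolding E_def S_def
        by (rule emeasure_W[OF W' dW']) measurable
      have l: "(\<integral>\<^sup>+\<omega>. (if 0 \<le> t \<and> t < g (W' \<omega>) then ennreal (f (W \<omega>)) else 0) \<partial>M)
          = (\<integral>\<^sup>+\<omega>. ennreal (f (W \<omega>)) * indicator E \<omega> \<partial>M)"
        using True by (intro nn_integral_cong) (auto simp: E_def indicator_def)
      have r: "(\<integral>\<^sup>+w. (if 0 \<le> t \<and> t < g w then ennreal (f w) else 0) \<partial>unif)
          = (\<integral>\<^sup>+w. ennreal (f w) * indicator S w \<partial>unif)"
        using True by (intro nn_integral_cong) (auto simp: S_def indicator_def)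
      show ?thesis
      proof (cases "{0<..<1} - S = {}")
        case True
        then have "{0<..<1} \<subseteq> S" by blast
        then have "S \<inter> {0<..<1} = {0<..<1}" by blast
        then have "emeasure unif S = 1" by (simp add: emeasure_unif)
        then have "emeasure M E = 1" using pE by simp
        then have "prob E = 1" by (simp add: emeasure_eq_measure)
        then have "AE \<omega> in M. \<omega> \<in> E" using E by (simp add: AE_in_set_eq_1)
        then have "(\<integral>\<^sup>+\<omega>. ennreal (f (W \<omega>)) * indicator E \<omega> \<partial>M) = (\<integral>\<^sup>+\<omega>. ennreal (f (W \<omega>)) \<partial>M)"
          by (intro nn_integral_cong_AE) (auto elim!: eventually_mono)
        also have "\<dots> = (\<integral>\<^sup>+w. ennreal (f w) \<partial>unif)"
          by (rule nn_integral_W[OF W dW]) measurable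
        also have "\<dots> \<ge> (\<integral>\<^sup>+w. ennreal (f w) * indicator S w \<partial>unif)"
          by (intro nn_integral_mono) (auto simp: indicator_def)
        finally show ?thesis using l r by simp
      next
        case False
        define k where "k = Inf (f ` ({0<..<1} - S))"
        have bdd: "bdd_below (f ` ({0<..<1} - S))" using fnn by (intro bdd_belowI[of _ 0]) auto
        have kC: "k \<le> f w" if "0 < w" "w < 1" "w \<notin> S" for w
          unfolding k_def using that bdd by (intro cInf_lower) auto
        have kS: "f w \<le> k" if "w \<in> S" "0 < w" "w < 1" for w
          unfolding k_def
        proof (rule cInf_greatest)
          show "f ` ({0<..<1} - S) \<noteq> {}" using False by blast
          fix y assume "y \<in> f ` ({0<..<1} - S)"
          then obtain c where c: "c \<notin> S" "0 < c" "c < 1" "y = f c" by auto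
          have "g c < g w" using that(1) c(1) by (simp add: S_def)
          then show "f w \<le> y" using anti[of c w] that c by simp
        qed
        have "(\<integral>\<^sup>+w. ennreal (f w) * indicator S w \<partial>unif) \<le> (\<integral>\<^sup>+\<omega>. ennreal (f (W \<omega>)) * indicator E \<omega> \<partial>M)"
          by (rule bathtub_ge[OF assms(1) W dW E S pE f, of k]) (auto intro: kS kC)
        then show ?thesis using l r by simp
      qed
    qed
  qed
  also have "\<dots> = (\<integral>\<^sup>+\<omega>. ennreal (f (W \<omega>) * g (W' \<omega>)) \<partial>M)"
    using layer_cake_swap[of M "\<lambda>\<omega>. f (W \<omega>)" "\<lambda>\<omega>. g (W' \<omega>)"] fnn gnn
    by (simp add: sigma_finite_measure_axioms)
  finally show ?thesis .
qed

lemma abs_mult_le_sq: "\<bar>(x::real) * y\<bar> \<le> x\<^sup>2 + y\<^sup>2"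
proof (cases "\<bar>x\<bar> \<le> \<bar>y\<bar>")
  case True
  then have "\<bar>x\<bar> * \<bar>y\<bar> \<le> \<bar>y\<bar> * \<bar>y\<bar>" by (intro mult_right_mono) auto
  then show ?thesis by (simp add: abs_mult power2_eq_square) (smt (verit) zero_le_square)
next
  case False
  then have "\<bar>x\<bar> * \<bar>y\<bar> \<le> \<bar>x\<bar> * \<bar>x\<bar>" by (intro mult_left_mono) auto
  then show ?thesis by (simp add: abs_mult power2_eq_square) (smt (verit) zero_le_square)
qed

lemma integrable_prod_sq:
  fixes X Y :: "'a \<Rightarrow> real"
  assumes X[measurable]: "X \<in> borel_measurable M" and Y[measurable]: "Y \<in> borel_measurable M"
    and iX: "integrable M (\<lambda>\<omega>. (X \<omega>)\<^sup>2)" and iY: "integrable M (\<lambda>\<omega>. (Y \<omega>)\<^sup>2)"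
  shows "integrable M (\<lambda>\<omega>. X \<omega> * Y \<omega>)"
proof (rule Bochner_Integration.integrable_bound)
  show "integrable M (\<lambda>\<omega>. (X \<omega>)\<^sup>2 + (Y \<omega>)\<^sup>2)" using iX iY by simp
  show "(\<lambda>\<omega>. X \<omega> * Y \<omega>) \<in> borel_measurable M" by measurable
  show "AE \<omega> in M. norm (X \<omega> * Y \<omega>) \<le> norm ((X \<omega>)\<^sup>2 + (Y \<omega>)\<^sup>2)"
    using abs_mult_le_sq by (auto simp: abs_of_nonneg)
qed

lemma integrable_parts_sq:
  fixes X :: "'a \<Rightarrow> real"
  assumes X[measurable]: "X \<in> borel_measurable M" and iX: "integrable M (\<lambda>\<omega>. (X \<omega>)\<^sup>2)"
  shows "integrable M (\<lambda>\<omega>. (max (X \<omega>) 0)\<^sup>2)" "integrable M (\<lambda>\<omega>. (max (- X \<omega>) 0)\<^sup>2)"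
proof -
  show "integrable M (\<lambda>\<omega>. (max (X \<omega>) 0)\<^sup>2)"
  proof (rule Bochner_Integration.integrable_bound[OF iX])
    show "(\<lambda>\<omega>. (max (X \<omega>) 0)\<^sup>2) \<in> borel_measurable M" by measurable
    show "AE \<omega> in M. norm ((max (X \<omega>) 0)\<^sup>2) \<le> norm ((X \<omega>)\<^sup>2)"
      by (auto simp: max_def)
  qed
  show "integrable M (\<lambda>\<omega>. (max (- X \<omega>) 0)\<^sup>2)"
  proof (rule Bochner_Integration.integrable_bound[OF iX])
    show "(\<lambda>\<omega>. (max (- X \<omega>) 0)\<^sup>2) \<in> borel_measurable M" by measurable
    show "AE \<omega> in M. norm ((max (- X \<omega>) 0)\<^sup>2) \<le> norm ((X \<omega>)\<^sup>2)"
      by (auto simp: max_def)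
  qed
qed

lemma prod_parts: "(x::real) * y = max x 0 * max y 0 - max x 0 * max (-y) 0 - max (-x) 0 * max y 0 + max (-x) 0 * max (-y) 0"
  by (cases "0 \<le> x"; cases "0 \<le> y") (auto simp: max_def)

lemma decomp_integral:
  fixes X Y :: "'a \<Rightarrow> real"
  assumes X[measurable]: "X \<in> borel_measurable M" and Y[measurable]: "Y \<in> borel_measurable M"
    and iX: "integrable M (\<lambda>\<omega>. (X \<omega>)\<^sup>2)" and iY: "integrable M (\<lambda>\<omega>. (Y \<omega>)\<^sup>2)"
  shows "integrable M (\<lambda>\<omega>. X \<omega> * Y \<omega>)"
    and "integrable M (\<lambda>\<omega>. max (X \<omega>) 0 * max (Y \<omega>) 0)"
    and "integrable M (\<lambda>\<omega>. max (X \<omega>) 0 * max (- Y \<omega>) 0)"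
    and "integrable M (\<lambda>\<omega>. max (- X \<omega>) 0 * max (Y \<omega>) 0)"
    and "integrable M (\<lambda>\<omega>. max (- X \<omega>) 0 * max (- Y \<omega>) 0)"
    and "(\<integral>\<omega>. X \<omega> * Y \<omega> \<partial>M) = (\<integral>\<omega>. max (X \<omega>) 0 * max (Y \<omega>) 0 \<partial>M)
          - (\<integral>\<omega>. max (X \<omega>) 0 * max (- Y \<omega>) 0 \<partial>M) - (\<integral>\<omega>. max (- X \<omega>) 0 * max (Y \<omega>) 0 \<partial>M)
          + (\<integral>\<omega>. max (- X \<omega>) 0 * max (- Y \<omega>) 0 \<partial>M)"
proof -
  note pX = integrable_parts_sq[OF X iX]
  note pY = integrable_parts_sq[OF Y iY]
  show i0: "integrable M (\<lambda>\<omega>. X \<omega> * Y \<omega>)" by (rule integrable_prod_sq[OF X Y iX iY])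
  show i1: "integrable M (\<lambda>\<omega>. max (X \<omega>) 0 * max (Y \<omega>) 0)"
    by (rule integrable_prod_sq[OF _ _ pX(1) pY(1)]) measurable
  show i2: "integrable M (\<lambda>\<omega>. max (X \<omega>) 0 * max (- Y \<omega>) 0)"
    by (rule integrable_prod_sq[OF _ _ pX(1) pY(2)]) measurable
  show i3: "integrable M (\<lambda>\<omega>. max (- X \<omega>) 0 * max (Y \<omega>) 0)"
    by (rule integrable_prod_sq[OF _ _ pX(2) pY(1)]) measurable
  show i4: "integrable M (\<lambda>\<omega>. max (- X \<omega>) 0 * max (- Y \<omega>) 0)"
    by (rule integrable_prod_sq[OF _ _ pX(2) pY(2)]) measurable
  have "(\<integral>\<omega>. X \<omega> * Y \<omega> \<partial>M) = (\<integral>\<omega>. max (X \<omega>) 0 * max (Y \<omega>) 0 - max (X \<omega>) 0 * max (- Y \<omega>) 0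
      - max (- X \<omega>) 0 * max (Y \<omega>) 0 + max (- X \<omega>) 0 * max (- Y \<omega>) 0 \<partial>M)"
    by (rule Bochner_Integration.integral_cong) (auto simp: prod_parts[of "X _" "Y _"])
  also have "\<dots> = (\<integral>\<omega>. max (X \<omega>) 0 * max (Y \<omega>) 0 \<partial>M)
          - (\<integral>\<omega>. max (X \<omega>) 0 * max (- Y \<omega>) 0 \<partial>M) - (\<integral>\<omega>. max (- X \<omega>) 0 * max (Y \<omega>) 0 \<partial>M)
          + (\<integral>\<omega>. max (- X \<omega>) 0 * max (- Y \<omega>) 0 \<partial>M)"
    using i1 i2 i3 i4 by (simp add: Bochner_Integration.integral_add Bochner_Integration.integral_diff)
  finally show "(\<integral>\<omega>. X \<omega> * Y \<omega> \<partial>M) = (\<integral>\<omega>. max (X \<omega>) 0 * max (Y \<omega>) 0 \<partial>M)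
          - (\<integral>\<omega>. max (X \<omega>) 0 * max (- Y \<omega>) 0 \<partial>M) - (\<integral>\<omega>. max (- X \<omega>) 0 * max (Y \<omega>) 0 \<partial>M)
          + (\<integral>\<omega>. max (- X \<omega>) 0 * max (- Y \<omega>) 0 \<partial>M)" .
qed

lemma nn_to_real:
  fixes F :: "'a \<Rightarrow> real" and G :: "'b \<Rightarrow> real"
  assumes "integrable M F" "integrable N G" "\<And>x. 0 \<le> F x" "\<And>x. 0 \<le> G x"
    and "(\<integral>\<^sup>+x. ennreal (F x) \<partial>M) \<le> (\<integral>\<^sup>+x. ennreal (G x) \<partial>N)"
  shows "integral\<^sup>L M F \<le> integral\<^sup>L N G"
proof -
  have "ennreal (integral\<^sup>L M F) \<le> ennreal (integral\<^sup>L N G)"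
    using assms by (simp add: nn_integral_eq_integral)
  moreover have "0 \<le> integral\<^sup>L N G" using assms(4) by (simp add: integral_nonneg)
  ultimately show ?thesis by (simp add: ennreal_le_iff)
qed

lemma integrable_sq_W:
  fixes a :: "real \<Rightarrow> real"
  assumes W[measurable]: "W \<in> borel_measurable M" and dW: "distr M borel W = unif"
    and a[measurable]: "a \<in> borel_measurable borel" and ia: "integrable unif (\<lambda>w. (a w)\<^sup>2)"
  shows "integrable M (\<lambda>\<omega>. (a (W \<omega>))\<^sup>2)"
proof -
  have "integrable (distr M borel W) (\<lambda>w. (a w)\<^sup>2)" using ia by (simp add: dW)
  then show ?thesis using integrable_distr_eq[of W M borel "\<lambda>w. (a w)\<^sup>2"] by simp
qed

lemma rearrangement:
  fixes a b :: "real \<Rightarrow> real"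
  assumes "prob_space M" and W[measurable]: "W \<in> borel_measurable M" and dW: "distr M borel W = unif"
    and W'[measurable]: "W' \<in> borel_measurable M" and dW': "distr M borel W' = unif"
    and a[measurable]: "a \<in> borel_measurable borel" and b[measurable]: "b \<in> borel_measurable borel"
    and ma: "mono_on {0<..<1} a" and mb: "mono_on {0<..<1} b"
    and ia: "integrable unif (\<lambda>w. (a w)\<^sup>2)" and ib: "integrable unif (\<lambda>w. (b w)\<^sup>2)"
  shows "integrable M (\<lambda>\<omega>. a (W \<omega>) * b (W' \<omega>))"
    and "(\<integral>\<omega>. a (W \<omega>) * b (W' \<omega>) \<partial>M) \<le> (\<integral>w. a w * b w \<partial>unif)"
proof -
  note iaW = integrable_sq_W[OF W dW a ia]
  note ibW = integrable_sq_W[OF W' dW' b ib]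
  note DM = decomp_integral[of "\<lambda>\<omega>. a (W \<omega>)" M "\<lambda>\<omega>. b (W' \<omega>)", OF _ _ iaW ibW, simplified]
  note DU = decomp_integral[of a unif b, OF _ _ ia ib, simplified]
  show "integrable M (\<lambda>\<omega>. a (W \<omega>) * b (W' \<omega>))" using DM(1) by simp
  have bw: "w < w'" if "0 < w" "w < 1" "0 < w'" "w' < 1" "b w < b w'" for w w'
  proof (rule ccontr)
    assume "\<not> w < w'"
    then have "b w' \<le> b w" using mb that by (intro mono_onD[OF mb]) auto
    then show False using that by simp
  qed
  have aw: "a w \<le> a w'" if "0 < w" "w < 1" "0 < w'" "w' < 1" "w < w'" for w w'
    using that by (intro mono_onD[OF ma]) auto
  have pp: "(\<integral>\<^sup>+\<omega>. ennreal (max (a (W \<omega>)) 0 * max (b (W' \<omega>)) 0) \<partial>M) \<le> (\<integral>\<^sup>+w. ennreal (max (a w) 0 * max (b w) 0) \<partial>unif)"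
  proof (rule rearr_nn_le[OF assms(1) W dW W' dW', where f="\<lambda>x. max (a x) 0" and g="\<lambda>x. max (b x) 0"])
    fix w w' :: real assume h: "0 < w" "w < 1" "0 < w'" "w' < 1" "max (b w) 0 < max (b w') 0"
    then have "b w < b w'" by (auto simp: max_def split: if_splits)
    then have "a w \<le> a w'" using bw aw h by blast
    then show "max (a w) 0 \<le> max (a w') 0" by (auto simp: max_def)
  qed auto
  have nn: "(\<integral>\<^sup>+\<omega>. ennreal (max (- a (W \<omega>)) 0 * max (- b (W' \<omega>)) 0) \<partial>M) \<le> (\<integral>\<^sup>+w. ennreal (max (- a w) 0 * max (- b w) 0) \<partial>unif)"
  proof (rule rearr_nn_le[OF assms(1) W dW W' dW', where f="\<lambda>x. max (- a x) 0" and g="\<lambda>x. max (- b x) 0"])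
    fix w w' :: real assume h: "0 < w" "w < 1" "0 < w'" "w' < 1" "max (- b w) 0 < max (- b w') 0"
    then have "b w' < b w" by (auto simp: max_def split: if_splits)
    then have "a w' \<le> a w" using bw aw h by blast
    then show "max (- a w) 0 \<le> max (- a w') 0" by (auto simp: max_def)
  qed auto
  have pn: "(\<integral>\<^sup>+w. ennreal (max (a w) 0 * max (- b w) 0) \<partial>unif) \<le> (\<integral>\<^sup>+\<omega>. ennreal (max (a (W \<omega>)) 0 * max (- b (W' \<omega>)) 0) \<partial>M)"
  proof (rule rearr_nn_ge[OF assms(1) W dW W' dW', where f="\<lambda>x. max (a x) 0" and g="\<lambda>x. max (- b x) 0"])
    fix w w' :: real assume h: "0 < w" "w < 1" "0 < w'" "w' < 1" "max (- b w) 0 < max (- b w') 0"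
    then have "b w' < b w" by (auto simp: max_def split: if_splits)
    then have "a w' \<le> a w" using bw aw h by blast
    then show "max (a w') 0 \<le> max (a w) 0" by (auto simp: max_def)
  qed auto
  have np: "(\<integral>\<^sup>+w. ennreal (max (- a w) 0 * max (b w) 0) \<partial>unif) \<le> (\<integral>\<^sup>+\<omega>. ennreal (max (- a (W \<omega>)) 0 * max (b (W' \<omega>)) 0) \<partial>M)"
  proof (rule rearr_nn_ge[OF assms(1) W dW W' dW', where f="\<lambda>x. max (- a x) 0" and g="\<lambda>x. max (b x) 0"])
    fix w w' :: real assume h: "0 < w" "w < 1" "0 < w'" "w' < 1" "max (b w) 0 < max (b w') 0"
    then have "b w < b w'" by (auto simp: max_def split: if_splits)
    then have "a w \<le> a w'" using bw aw h by blast
    then show "max (- a w') 0 \<le> max (- a w) 0" by (auto simp: max_def)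
  qed auto
  have r1: "(\<integral>\<omega>. max (a (W \<omega>)) 0 * max (b (W' \<omega>)) 0 \<partial>M) \<le> (\<integral>w. max (a w) 0 * max (b w) 0 \<partial>unif)"
    by (rule nn_to_real[OF DM(2) DU(2) _ _ pp]) auto
  have r4: "(\<integral>\<omega>. max (- a (W \<omega>)) 0 * max (- b (W' \<omega>)) 0 \<partial>M) \<le> (\<integral>w. max (- a w) 0 * max (- b w) 0 \<partial>unif)"
    by (rule nn_to_real[OF DM(5) DU(5) _ _ nn]) auto
  have r2: "(\<integral>w. max (a w) 0 * max (- b w) 0 \<partial>unif) \<le> (\<integral>\<omega>. max (a (W \<omega>)) 0 * max (- b (W' \<omega>)) 0 \<partial>M)"
    by (rule nn_to_real[OF DU(3) DM(3) _ _ pn]) auto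
  have r3: "(\<integral>w. max (- a w) 0 * max (b w) 0 \<partial>unif) \<le> (\<integral>\<omega>. max (- a (W \<omega>)) 0 * max (b (W' \<omega>)) 0 \<partial>M)"
    by (rule nn_to_real[OF DU(4) DM(4) _ _ np]) auto
  show "(\<integral>\<omega>. a (W \<omega>) * b (W' \<omega>) \<partial>M) \<le> (\<integral>w. a w * b w \<partial>unif)"
    using DM(6) DU(6) r1 r2 r3 r4 by linarith
qed

lemma unif_density_real: "unif = density lborel (\<lambda>x. ennreal (indicator {0<..<1::real} x))"
  by (simp add: unif_def ennreal_indicator)

lemma integrable_unif_iff:
  fixes f :: "real \<Rightarrow> real"
  assumes f[measurable]: "f \<in> borel_measurable borel"
  shows "integrable unif f \<longleftrightarrow> set_integrable lborel {0..1} f"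
proof -
  have "integrable unif f \<longleftrightarrow> integrable lborel (\<lambda>x. indicator {0<..<1::real} x *\<^sub>R f x)"
    unfolding unif_density_real by (rule integrable_density) auto
  also have "\<dots> \<longleftrightarrow> integrable lborel (\<lambda>x. indicator {0..1::real} x *\<^sub>R f x)"
    using AE_lborel_ne01 by (intro integrable_cong_AE) (auto elim!: eventually_mono simp: indicator_def)
  finally show ?thesis by (simp add: set_integrable_def)
qed

lemma integral_unif_eq:
  fixes f :: "real \<Rightarrow> real"
  assumes f[measurable]: "f \<in> borel_measurable borel"
  shows "integral\<^sup>L unif f = (LINT x:{0..1}|lborel. f x)"
proof -
  have "integral\<^sup>L unif f = (\<integral>x. indicator {0<..<1::real} x *\<^sub>R f x \<partial>lborel)"
    unfolding unif_density_real by (rule integral_density) auto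
  also have "\<dots> = (\<integral>x. indicator {0..1::real} x *\<^sub>R f x \<partial>lborel)"
    using AE_lborel_ne01 by (intro integral_cong_AE) (auto elim!: eventually_mono simp: indicator_def)
  finally show ?thesis by (simp add: set_lebesgue_integral_def)
qed

lemma std_facts:
  assumes "standardized g"
  shows "integrable unif (\<lambda>x. (trunc g x)\<^sup>2)" "integral\<^sup>L unif (trunc g) = 0"
    "integral\<^sup>L unif (\<lambda>x. (trunc g x)\<^sup>2) = 1"
proof -
  note m[measurable] = trunc_meas[OF assms]
  have s: "set_integrable lborel {0..1} (\<lambda>u. (g u)\<^sup>2)" "(LINT u:{0..1}|lborel. g u) = 0"
    "(LINT u:{0..1}|lborel. (g u)\<^sup>2) = 1" using assms unfolding standardized_def by blast+
  have e1: "set_integrable lborel {0..1} (\<lambda>x. (trunc g x)\<^sup>2) = set_integrable lborel {0..1} (\<lambda>u. (g u)\<^sup>2)"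
    by (rule set_integrable_cong) (auto simp: trunc_eq)
  have e2: "(LINT x:{0..1}|lborel. trunc g x) = (LINT u:{0..1}|lborel. g u)"
    by (rule set_lebesgue_integral_cong) (auto simp: trunc_eq)
  have e3: "(LINT x:{0..1}|lborel. (trunc g x)\<^sup>2) = (LINT u:{0..1}|lborel. (g u)\<^sup>2)"
    by (rule set_lebesgue_integral_cong) (auto simp: trunc_eq)
  have i1: "integrable unif (\<lambda>x. (trunc g x)\<^sup>2) = set_integrable lborel {0..1} (\<lambda>x. (trunc g x)\<^sup>2)"
    by (rule integrable_unif_iff) measurable
  show "integrable unif (\<lambda>x. (trunc g x)\<^sup>2)" using i1 e1 s(1) by simp
  have i2: "integral\<^sup>L unif (trunc g) = (LINT x:{0..1}|lborel. trunc g x)"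
    by (rule integral_unif_eq) measurable
  show "integral\<^sup>L unif (trunc g) = 0" using i2 e2 s(2) by simp
  have i3: "integral\<^sup>L unif (\<lambda>x. (trunc g x)\<^sup>2) = (LINT x:{0..1}|lborel. (trunc g x)\<^sup>2)"
    by (rule integral_unif_eq) measurable
  show "integral\<^sup>L unif (\<lambda>x. (trunc g x)\<^sup>2) = 1" using i3 e3 s(3) by simp
qed

lemma Q_facts:
  assumes "standardized g" "pw_cont_strict_mono g"
  shows "qf (unif_dist_fn g) \<in> borel_measurable borel"
    "mono_on {0<..<1} (qf (unif_dist_fn g))"
    "distr unif borel (qf (unif_dist_fn g)) = law g"
    "integrable unif (\<lambda>w. (qf (unif_dist_fn g) w)\<^sup>2)"
    "integral\<^sup>L unif (\<lambda>w. (qf (unif_dist_fn g) w)\<^sup>2) = 1"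
proof -
  interpret L: real_distribution "law g" by (rule real_distribution_law[OF assms(1)])
  have F: "unif_dist_fn g = cdf (law g)" using cdf_law[OF assms(1)] by simp
  note m[measurable] = trunc_meas[OF assms(1)]
  show qm[measurable]: "qf (unif_dist_fn g) \<in> borel_measurable borel" unfolding F by (rule L.qf_meas)
  show "mono_on {0<..<1} (qf (unif_dist_fn g))" unfolding F by (rule L.qf_mono)
  show d: "distr unif borel (qf (unif_dist_fn g)) = law g" unfolding F by (rule L.distr_qf)
  have "integrable unif (\<lambda>w. (qf (unif_dist_fn g) w)\<^sup>2) \<longleftrightarrow> integrable (distr unif borel (qf (unif_dist_fn g))) (\<lambda>x. x\<^sup>2)"
    by (subst integrable_distr_eq) auto
  also have "\<dots> \<longleftrightarrow> integrable (distr unif borel (trunc g)) (\<lambda>x. x\<^sup>2)" by (simp add: d law_def)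
  also have "\<dots> \<longleftrightarrow> integrable unif (\<lambda>x. (trunc g x)\<^sup>2)" by (subst integrable_distr_eq) auto
  finally show "integrable unif (\<lambda>w. (qf (unif_dist_fn g) w)\<^sup>2)" using std_facts(1)[OF assms(1)] by simp
  have "integral\<^sup>L unif (\<lambda>w. (qf (unif_dist_fn g) w)\<^sup>2) = integral\<^sup>L (distr unif borel (qf (unif_dist_fn g))) (\<lambda>x. x\<^sup>2)"
    by (subst integral_distr) auto
  also have "\<dots> = integral\<^sup>L (distr unif borel (trunc g)) (\<lambda>x. x\<^sup>2)" by (simp add: d law_def)
  also have "\<dots> = integral\<^sup>L unif (\<lambda>x. (trunc g x)\<^sup>2)" by (subst integral_distr) auto
  finally show "integral\<^sup>L unif (\<lambda>w. (qf (unif_dist_fn g) w)\<^sup>2) = 1" using std_facts(3)[OF assms(1)] by simp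
qed

lemma dist_fn_bounds:
  assumes "prob_space M" "X \<in> borel_measurable M"
  shows "0 \<le> dist_fn M X x" "dist_fn M X x \<le> 1"
proof -
  interpret prob_space M by fact
  interpret N: real_distribution "distr M borel X" using assms(2) by simp
  show "0 \<le> dist_fn M X x" by (simp add: dist_fn_def N.cdf_nonneg)
  show "dist_fn M X x \<le> 1" by (simp add: dist_fn_def N.cdf_bounded_prob)
qed

lemma dist_fn_meas:
  assumes "prob_space M" "X \<in> borel_measurable M"
  shows "dist_fn M X \<in> borel_measurable borel"
proof -
  interpret prob_space M by fact
  interpret N: real_distribution "distr M borel X" using assms(2) by simp
  show ?thesis unfolding dist_fn_def by (intro borel_measurable_mono monoI N.cdf_nondecreasing)
qed

lemma rv_setup:
  assumes g: "standardized g" "pw_cont_strict_mono g" and M: "prob_space M" and X: "continuous_rv M X"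
  defines "A \<equiv> \<lambda>\<omega>. g (dist_fn M X (X \<omega>))"
  shows "A \<in> borel_measurable M"
    "(\<lambda>\<omega>. unif_dist_fn g (A \<omega>)) \<in> borel_measurable M"
    "distr M borel (\<lambda>\<omega>. unif_dist_fn g (A \<omega>)) = unif"
    "AE \<omega> in M. qf (unif_dist_fn g) (unif_dist_fn g (A \<omega>)) = A \<omega>"
    "integral\<^sup>L M A = 0"
    "integrable M (\<lambda>\<omega>. (A \<omega>)\<^sup>2)"
    "integral\<^sup>L M (\<lambda>\<omega>. (A \<omega>)\<^sup>2) = 1"
proof -
  interpret prob_space M by fact
  have Xm[measurable]: "X \<in> borel_measurable M" and Xc: "\<And>x. isCont (dist_fn M X) x"
    using X by (auto simp: continuous_rv_def)
  note Fm[measurable] = dist_fn_meas[OF M Xm]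
  note tm[measurable] = trunc_meas[OF g(1)]
  define U where "U = (\<lambda>\<omega>. dist_fn M X (X \<omega>))"
  have Um[measurable]: "U \<in> borel_measurable M" unfolding U_def by measurable
  have dU: "distr M borel U = unif" unfolding U_def by (rule PIT[OF M Xm Xc])
  have AU: "A = (\<lambda>\<omega>. trunc g (U \<omega>))"
    using dist_fn_bounds[OF M Xm] by (auto simp: A_def U_def trunc_eq)
  show Am[measurable]: "A \<in> borel_measurable M" unfolding AU by measurable
  have dA: "distr M borel A = law g"
    unfolding AU law_def dU[symmetric] by (subst distr_distr) (auto simp: comp_def)
  have FA: "dist_fn M A = unif_dist_fn g" by (simp add: dist_fn_def dA cdf_law[OF g(1)])
  have Ac: "\<And>x. isCont (dist_fn M A) x" unfolding dist_fn_def dA by (rule cont_law[OF g])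
  note FAm[measurable] = dist_fn_meas[OF M Am]
  show "(\<lambda>\<omega>. unif_dist_fn g (A \<omega>)) \<in> borel_measurable M" unfolding FA[symmetric] by measurable
  show "distr M borel (\<lambda>\<omega>. unif_dist_fn g (A \<omega>)) = unif" using PIT[OF M Am Ac] by (simp add: FA)
  show "AE \<omega> in M. qf (unif_dist_fn g) (unif_dist_fn g (A \<omega>)) = A \<omega>"
    using qf_cdf_AE[OF M Am Ac] by (simp add: FA)
  have "integral\<^sup>L M A = integral\<^sup>L unif (trunc g)"
    unfolding AU dU[symmetric] by (subst integral_distr) auto
  then show "integral\<^sup>L M A = 0" using std_facts(2)[OF g(1)] by simp
  have "integrable M (\<lambda>\<omega>. (A \<omega>)\<^sup>2) \<longleftrightarrow> integrable unif (\<lambda>x. (trunc g x)\<^sup>2)"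
    unfolding AU dU[symmetric] by (subst integrable_distr_eq) auto
  then show "integrable M (\<lambda>\<omega>. (A \<omega>)\<^sup>2)" using std_facts(1)[OF g(1)] by simp
  have "integral\<^sup>L M (\<lambda>\<omega>. (A \<omega>)\<^sup>2) = integral\<^sup>L unif (\<lambda>x. (trunc g x)\<^sup>2)"
    unfolding AU dU[symmetric] by (subst integral_distr) auto
  then show "integral\<^sup>L M (\<lambda>\<omega>. (A \<omega>)\<^sup>2) = 1" using std_facts(3)[OF g(1)] by simp
qed

lemma pearson_std:
  assumes "integral\<^sup>L M A = 0" "integral\<^sup>L M B = 0" "integral\<^sup>L M (\<lambda>\<omega>. (A \<omega>)\<^sup>2) = 1" "integral\<^sup>L M (\<lambda>\<omega>. (B \<omega>)\<^sup>2) = 1"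
  shows "pearson M A B = integral\<^sup>L M (\<lambda>\<omega>. A \<omega> * B \<omega>)"
  using assms by (simp add: pearson_def Let_def)

lemma refl_unif: "distr unif borel (\<lambda>x. 1 - x) = unif"
proof (rule cdf_unique)
  show "real_distribution (distr unif borel (\<lambda>x. 1 - x))"
    using prob_space_unif by (auto simp: real_distribution_def real_distribution_axioms_def intro!: prob_space.prob_space_distr)
  show "real_distribution unif" by (rule real_distribution_unif)
  show "cdf (distr unif borel (\<lambda>x. 1 - x)) = cdf unif"
  proof
    fix t :: real
    have "cdf (distr unif borel (\<lambda>x. 1 - x)) t = measure unif {x. 1 - x \<le> t}"
      by (simp add: cdf_def measure_distr vimage_def)
    also have "\<dots> = measure lborel ({x. 1 - x \<le> t} \<inter> {0<..<1})"
      by (subst measure_unif) auto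
    also have "\<dots> = max 0 (min 1 t)"
    proof (cases "t \<le> 0")
      case True
      then have "{x. 1 - x \<le> t} \<inter> {0<..<1} = {}" by auto
      then show ?thesis using True by simp
    next
      case False
      show ?thesis
      proof (cases "1 \<le> t")
        case True
        then have "{x. 1 - x \<le> t} \<inter> {0<..<1} = {0<..<1::real}" by auto
        then show ?thesis using True by simp
      next
        case False2: False
        then have "{x. 1 - x \<le> t} \<inter> {0<..<1} = {1 - t..<1}" using False by auto
        then show ?thesis using False False2 by simp
      qed
    qed
    finally show "cdf (distr unif borel (\<lambda>x. 1 - x)) t = cdf unif t" by (simp add: cdf_unif)
  qed
qed

lemma W_refl:
  assumes W[measurable]: "W \<in> borel_measurable M" and dW: "distr M borel W = unif"
  shows "distr M borel (\<lambda>\<omega>. 1 - W \<omega>) = unif"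
proof -
  have "distr M borel (\<lambda>\<omega>. 1 - W \<omega>) = distr (distr M borel W) borel (\<lambda>x. 1 - x)"
    by (subst distr_distr) (auto simp: comp_def)
  then show ?thesis using refl_unif dW by simp
qed

definition qf2 :: "(real \<Rightarrow> real) \<Rightarrow> real \<Rightarrow> real" where
  "qf2 F w = (if w = 0 then gen_inv F 0 else if w = 1 then gen_inv F 1 else qf F w)"

lemma qf2_eq: "w \<in> {0..1} \<Longrightarrow> qf2 F w = gen_inv F w"
  by (auto simp: qf2_def qf_def)

lemma qf2_qf: "0 < w \<Longrightarrow> w < 1 \<Longrightarrow> qf2 F w = qf F w"
  by (auto simp: qf2_def)

lemma qf2_meas:
  assumes [measurable]: "qf F \<in> borel_measurable borel"
  shows "qf2 F \<in> borel_measurable borel"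
  unfolding qf2_def by measurable

lemma rho_max_eq:
  assumes [measurable]: "qf F \<in> borel_measurable borel" "qf G \<in> borel_measurable borel"
  shows "(LINT u:{0..1}|lborel. gen_inv F u * gen_inv G u) = (\<integral>u. qf F u * qf G u \<partial>unif)"
proof -
  note [measurable] = qf2_meas[OF assms(1)] qf2_meas[OF assms(2)]
  have "(LINT u:{0..1}|lborel. gen_inv F u * gen_inv G u) = (LINT u:{0..1}|lborel. qf2 F u * qf2 G u)"
    by (rule set_lebesgue_integral_cong) (auto simp: qf2_eq)
  also have "\<dots> = (\<integral>u. qf2 F u * qf2 G u \<partial>unif)"
    by (rule integral_unif_eq[symmetric]) measurable
  also have "\<dots> = (\<integral>u. qf F u * qf G u \<partial>unif)"
  proof -
    have ae: "AE u in unif. qf2 F u * qf2 G u = qf F u * qf G u"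
      using AE_unif by eventually_elim (simp add: qf2_qf)
    show ?thesis by (rule integral_cong_AE[OF _ _ ae]; measurable)
  qed
  finally show ?thesis .
qed

lemma rho_min_eq:
  assumes [measurable]: "qf F \<in> borel_measurable borel" "qf G \<in> borel_measurable borel"
  shows "(LINT u:{0..1}|lborel. gen_inv F u * gen_inv G (1 - u)) = (\<integral>u. qf F u * qf G (1 - u) \<partial>unif)"
proof -
  note [measurable] = qf2_meas[OF assms(1)] qf2_meas[OF assms(2)]
  have "(LINT u:{0..1}|lborel. gen_inv F u * gen_inv G (1 - u)) = (LINT u:{0..1}|lborel. qf2 F u * qf2 G (1 - u))"
    by (rule set_lebesgue_integral_cong) (auto simp: qf2_eq)
  also have "\<dots> = (\<integral>u. qf2 F u * qf2 G (1 - u) \<partial>unif)"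
    by (rule integral_unif_eq[symmetric]) measurable
  also have "\<dots> = (\<integral>u. qf F u * qf G (1 - u) \<partial>unif)"
  proof -
    have ae: "AE u in unif. qf2 F u * qf2 G (1 - u) = qf F u * qf G (1 - u)"
      using AE_unif by eventually_elim (simp add: qf2_qf)
    show ?thesis by (rule integral_cong_AE[OF _ _ ae]; measurable)
  qed
  finally show ?thesis .
qed

lemma spearman_repr:
  assumes g: "standardized g" "pw_cont_strict_mono g" and h: "standardized h" "pw_cont_strict_mono h"
    and M: "prob_space M" and X: "continuous_rv M X" and Y: "continuous_rv M Y"
  shows "gen_spearman g h M X Y = (\<integral>\<omega>. qf (unif_dist_fn g) (unif_dist_fn g (g (dist_fn M X (X \<omega>))))
              * qf (unif_dist_fn h) (unif_dist_fn h (h (dist_fn M Y (Y \<omega>)))) \<partial>M)"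
proof -
  note SX = rv_setup[OF g M X]
  note SY = rv_setup[OF h M Y]
  note [measurable] = SX(1,2) SY(1,2) Q_facts(1)[OF g] Q_facts(1)[OF h]
  have "gen_spearman g h M X Y = (\<integral>\<omega>. g (dist_fn M X (X \<omega>)) * h (dist_fn M Y (Y \<omega>)) \<partial>M)"
    unfolding gen_spearman_def by (rule pearson_std[OF SX(5) SY(5) SX(7) SY(7)])
  also have "\<dots> = (\<integral>\<omega>. qf (unif_dist_fn g) (unif_dist_fn g (g (dist_fn M X (X \<omega>))))
              * qf (unif_dist_fn h) (unif_dist_fn h (h (dist_fn M Y (Y \<omega>)))) \<partial>M)"
  proof -
    have ae: "AE \<omega> in M. g (dist_fn M X (X \<omega>)) * h (dist_fn M Y (Y \<omega>)) = qf (unif_dist_fn g) (unif_dist_fn g (g (dist_fn M X (X \<omega>))))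
              * qf (unif_dist_fn h) (unif_dist_fn h (h (dist_fn M Y (Y \<omega>))))"
      using SX(4) SY(4) by eventually_elim simp
    show ?thesis by (rule integral_cong_AE[OF _ _ ae]; measurable)
  qed
  finally show ?thesis .
qed


lemma upper_bound:
  assumes g: "standardized g" "pw_cont_strict_mono g" and h: "standardized h" "pw_cont_strict_mono h"
    and M: "prob_space M" and X: "continuous_rv M X" and Y: "continuous_rv M Y"
  shows "gen_spearman g h M X Y \<le> (LINT u:{0..1}|lborel. gen_inv (unif_dist_fn g) u * gen_inv (unif_dist_fn h) u)"
proof -
  note SX = rv_setup[OF g M X]
  note SY = rv_setup[OF h M Y]
  note QG = Q_facts[OF g] and QH = Q_facts[OF h]
  note [measurable] = SX(1,2) SY(1,2) QG(1) QH(1)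
  have "gen_spearman g h M X Y \<le> (\<integral>u. qf (unif_dist_fn g) u * qf (unif_dist_fn h) u \<partial>unif)"
    unfolding spearman_repr[OF g h M X Y]
    by (rule rearrangement(2)[OF M SX(2,3) SY(2,3) QG(1) QH(1) QG(2) QH(2) QG(4) QH(4)])
  then show ?thesis using rho_max_eq[OF QG(1) QH(1)] by simp
qed

lemma upper_attained:
  assumes g: "standardized g" "pw_cont_strict_mono g" and h: "standardized h" "pw_cont_strict_mono h"
    and M: "prob_space M" and X: "continuous_rv M X" and Y: "continuous_rv M Y"
    and ae: "AE \<omega> in M. unif_dist_fn g (g (dist_fn M X (X \<omega>))) = unif_dist_fn h (h (dist_fn M Y (Y \<omega>)))"
  shows "gen_spearman g h M X Y = (LINT u:{0..1}|lborel. gen_inv (unif_dist_fn g) u * gen_inv (unif_dist_fn h) u)"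
proof -
  note SX = rv_setup[OF g M X]
  note SY = rv_setup[OF h M Y]
  note QG = Q_facts[OF g] and QH = Q_facts[OF h]
  note [measurable] = SX(1,2) SY(1,2) QG(1) QH(1)
  have "gen_spearman g h M X Y = (\<integral>\<omega>. qf (unif_dist_fn g) (unif_dist_fn g (g (dist_fn M X (X \<omega>))))
              * qf (unif_dist_fn h) (unif_dist_fn g (g (dist_fn M X (X \<omega>)))) \<partial>M)"
    unfolding spearman_repr[OF g h M X Y]
  proof -
    have ae2: "AE \<omega> in M. qf (unif_dist_fn g) (unif_dist_fn g (g (dist_fn M X (X \<omega>))))
              * qf (unif_dist_fn h) (unif_dist_fn h (h (dist_fn M Y (Y \<omega>)))) =
          qf (unif_dist_fn g) (unif_dist_fn g (g (dist_fn M X (X \<omega>))))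
              * qf (unif_dist_fn h) (unif_dist_fn g (g (dist_fn M X (X \<omega>))))"
      using ae by eventually_elim simp
    show "(\<integral>\<omega>. qf (unif_dist_fn g) (unif_dist_fn g (g (dist_fn M X (X \<omega>))))
              * qf (unif_dist_fn h) (unif_dist_fn h (h (dist_fn M Y (Y \<omega>)))) \<partial>M) =
        (\<integral>\<omega>. qf (unif_dist_fn g) (unif_dist_fn g (g (dist_fn M X (X \<omega>))))
              * qf (unif_dist_fn h) (unif_dist_fn g (g (dist_fn M X (X \<omega>)))) \<partial>M)"
      by (rule integral_cong_AE[OF _ _ ae2]; measurable)
  qed
  also have "\<dots> = (\<integral>u. qf (unif_dist_fn g) u * qf (unif_dist_fn h) u \<partial>distr M borel (\<lambda>\<omega>. unif_dist_fn g (g (dist_fn M X (X \<omega>)))))"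
    by (subst integral_distr) auto
  also have "\<dots> = (\<integral>u. qf (unif_dist_fn g) u * qf (unif_dist_fn h) u \<partial>unif)"
    using SX(3) by simp
  finally show ?thesis using rho_max_eq[OF QG(1) QH(1)] by simp
qed

lemma lower_bound:
  assumes g: "standardized g" "pw_cont_strict_mono g" and h: "standardized h" "pw_cont_strict_mono h"
    and M: "prob_space M" and X: "continuous_rv M X" and Y: "continuous_rv M Y"
  shows "(LINT u:{0..1}|lborel. gen_inv (unif_dist_fn g) u * gen_inv (unif_dist_fn h) (1 - u)) \<le> gen_spearman g h M X Y"
proof -
  note SX = rv_setup[OF g M X]
  note SY = rv_setup[OF h M Y]
  note QG = Q_facts[OF g] and QH = Q_facts[OF h]
  note [measurable] = SX(1,2) SY(1,2) QG(1) QH(1)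
  define Qg where "Qg = qf (unif_dist_fn g)"
  define Qh where "Qh = qf (unif_dist_fn h)"
  define W where "W = (\<lambda>\<omega>. unif_dist_fn g (g (dist_fn M X (X \<omega>))))"
  define W' where "W' = (\<lambda>\<omega>. unif_dist_fn h (h (dist_fn M Y (Y \<omega>))))"
  have [measurable]: "Qg \<in> borel_measurable borel" "Qh \<in> borel_measurable borel"
    "W \<in> borel_measurable M" "W' \<in> borel_measurable M"
    unfolding Qg_def Qh_def W_def W'_def by measurable
  have dW: "distr M borel W = unif" using SX(3) by (simp add: W_def)
  have dW'': "distr M borel (\<lambda>\<omega>. 1 - W' \<omega>) = unif"
    by (rule W_refl) (use SY(3) in \<open>auto simp: W'_def\<close>)
  define b where "b = (\<lambda>w. - Qh (1 - w))"
  have bm[measurable]: "b \<in> borel_measurable borel" unfolding b_def by measurable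
  have mb: "mono_on {0<..<1} b"
    unfolding b_def
  proof (rule mono_onI)
    fix r s :: real assume "r \<in> {0<..<1}" "s \<in> {0<..<1}" "r \<le> s"
    then have "Qh (1 - s) \<le> Qh (1 - r)" using QH(2) unfolding Qh_def by (intro mono_onD[OF QH(2)]) auto
    then show "- Qh (1 - r) \<le> - Qh (1 - s)" by simp
  qed
  have ib: "integrable unif (\<lambda>w. (b w)\<^sup>2)"
  proof -
    have "integrable (distr unif borel (\<lambda>x. 1 - x)) (\<lambda>w. (Qh w)\<^sup>2)" using QH(4) by (simp add: refl_unif Qh_def)
    then have "integrable unif (\<lambda>w. (Qh (1 - w))\<^sup>2)" by (subst (asm) integrable_distr_eq) auto
    then show ?thesis by (simp add: b_def)
  qed
  have "(\<integral>\<omega>. Qg (W \<omega>) * b (1 - W' \<omega>) \<partial>M) \<le> (\<integral>w. Qg w * b w \<partial>unif)"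
    by (rule rearrangement(2)[OF M _ dW _ dW'' _ bm _ mb _ ib])
       (use QG in \<open>auto simp: Qg_def\<close>)
  then have "- (\<integral>\<omega>. Qg (W \<omega>) * Qh (W' \<omega>) \<partial>M) \<le> - (\<integral>w. Qg w * Qh (1 - w) \<partial>unif)"
    by (simp add: b_def)
  then have "(\<integral>w. Qg w * Qh (1 - w) \<partial>unif) \<le> (\<integral>\<omega>. Qg (W \<omega>) * Qh (W' \<omega>) \<partial>M)" by simp
  then show ?thesis
    using rho_min_eq[OF QG(1) QH(1)] spearman_repr[OF g h M X Y]
    by (simp add: Qg_def Qh_def W_def W'_def)
qed

lemma lower_attained:
  assumes g: "standardized g" "pw_cont_strict_mono g" and h: "standardized h" "pw_cont_strict_mono h"
    and M: "prob_space M" and X: "continuous_rv M X" and Y: "continuous_rv M Y"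
    and ae: "AE \<omega> in M. unif_dist_fn g (g (dist_fn M X (X \<omega>))) = 1 - unif_dist_fn h (h (dist_fn M Y (Y \<omega>)))"
  shows "gen_spearman g h M X Y = (LINT u:{0..1}|lborel. gen_inv (unif_dist_fn g) u * gen_inv (unif_dist_fn h) (1 - u))"
proof -
  note SX = rv_setup[OF g M X]
  note SY = rv_setup[OF h M Y]
  note QG = Q_facts[OF g] and QH = Q_facts[OF h]
  note [measurable] = SX(1,2) SY(1,2) QG(1) QH(1)
  define Qg where "Qg = qf (unif_dist_fn g)"
  define Qh where "Qh = qf (unif_dist_fn h)"
  define W where "W = (\<lambda>\<omega>. unif_dist_fn g (g (dist_fn M X (X \<omega>))))"
  define W' where "W' = (\<lambda>\<omega>. unif_dist_fn h (h (dist_fn M Y (Y \<omega>))))"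
  have [measurable]: "Qg \<in> borel_measurable borel" "Qh \<in> borel_measurable borel"
    "W \<in> borel_measurable M" "W' \<in> borel_measurable M"
    unfolding Qg_def Qh_def W_def W'_def by measurable
  have dW: "distr M borel W = unif" using SX(3) by (simp add: W_def)
  have ae2: "AE \<omega> in M. Qg (W \<omega>) * Qh (W' \<omega>) = Qg (W \<omega>) * Qh (1 - W \<omega>)"
    using ae by eventually_elim (simp add: W_def W'_def)
  have "(\<integral>\<omega>. Qg (W \<omega>) * Qh (W' \<omega>) \<partial>M) = (\<integral>\<omega>. Qg (W \<omega>) * Qh (1 - W \<omega>) \<partial>M)"
    by (rule integral_cong_AE[OF _ _ ae2]; measurable)
  also have "\<dots> = (\<integral>u. Qg u * Qh (1 - u) \<partial>distr M borel W)"
    by (subst integral_distr) auto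
  also have "\<dots> = (\<integral>u. Qg u * Qh (1 - u) \<partial>unif)" using dW by simp
  finally show ?thesis
    using rho_min_eq[OF QG(1) QH(1)] spearman_repr[OF g h M X Y]
    by (simp add: Qg_def Qh_def W_def W'_def)
qed

lemma part_c1:
  assumes g: "standardized g" "pw_cont_strict_mono g" and h: "standardized h" "pw_cont_strict_mono h"
    and eq: "unif_dist_fn g = unif_dist_fn h"
  shows "(LINT u:{0..1}|lborel. gen_inv (unif_dist_fn g) u * gen_inv (unif_dist_fn h) u) = 1"
proof -
  note QG = Q_facts[OF g] and QH = Q_facts[OF h]
  have "(LINT u:{0..1}|lborel. gen_inv (unif_dist_fn g) u * gen_inv (unif_dist_fn h) u)
     = (\<integral>u. qf (unif_dist_fn g) u * qf (unif_dist_fn h) u \<partial>unif)" by (rule rho_max_eq[OF QG(1) QH(1)])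
  also have "\<dots> = (\<integral>u. (qf (unif_dist_fn g) u)\<^sup>2 \<partial>unif)" by (simp add: eq power2_eq_square)
  also have "\<dots> = 1" by (rule QG(5))
  finally show ?thesis .
qed

lemma part_c2:
  assumes g: "standardized g" "pw_cont_strict_mono g" and h: "standardized h" "pw_cont_strict_mono h"
    and eq: "\<forall>u\<in>{0<..<1}. gen_inv (unif_dist_fn h) (1 - u) = - gen_inv (unif_dist_fn g) u"
  shows "(LINT u:{0..1}|lborel. gen_inv (unif_dist_fn g) u * gen_inv (unif_dist_fn h) (1 - u)) = -1"
proof -
  note QG = Q_facts[OF g] and QH = Q_facts[OF h]
  note [measurable] = QG(1) QH(1)
  have "(LINT u:{0..1}|lborel. gen_inv (unif_dist_fn g) u * gen_inv (unif_dist_fn h) (1 - u))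
     = (\<integral>u. qf (unif_dist_fn g) u * qf (unif_dist_fn h) (1 - u) \<partial>unif)" by (rule rho_min_eq[OF QG(1) QH(1)])
  also have "\<dots> = (\<integral>u. - ((qf (unif_dist_fn g) u)\<^sup>2) \<partial>unif)"
  proof -
    have ae: "AE u in unif. qf (unif_dist_fn g) u * qf (unif_dist_fn h) (1 - u) = - ((qf (unif_dist_fn g) u)\<^sup>2)"
      using AE_unif by eventually_elim (use eq in \<open>auto simp: qf_def power2_eq_square\<close>)
    show ?thesis by (rule integral_cong_AE[OF _ _ ae]; measurable)
  qed
  also have "\<dots> = -1" using QG(5) by simp
  finally show ?thesis .
qed

locale pwh =
  fixes h :: "real \<Rightarrow> real" and K :: nat and v :: "nat \<Rightarrow> real"
  assumes std: "standardized h" and pw: "pw_cont_strict_mono h"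
    and v0: "v 0 = 0" and vK: "v K = 1" and vinc: "\<And>m. m < K \<Longrightarrow> v m < v (Suc m)"
    and smono: "\<And>m. m < K \<Longrightarrow> strict_mono_on {v m<..<v (Suc m)} h \<or> strict_antimono_on {v m<..<v (Suc m)} h"
begin

abbreviation I :: "nat \<Rightarrow> real set" where "I m \<equiv> {v m<..<v (Suc m)}"

definition T :: "real \<Rightarrow> real" where "T x = unif_dist_fn h (trunc h x)"

lemma v_mono: "m \<le> n \<Longrightarrow> n \<le> K \<Longrightarrow> v m \<le> v n"
proof (induction n)
  case 0 then show ?case by simp
next
  case (Suc n)
  show ?case
  proof (cases "m = Suc n")
    case True then show ?thesis by simp
  next
    case False
    then have "m \<le> n" using Suc by simp
    then have "v m \<le> v n" using Suc by simp
    also have "v n < v (Suc n)" using vinc Suc by simp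
    finally show ?thesis by simp
  qed
qed

lemma v_01: "m \<le> K \<Longrightarrow> 0 \<le> v m \<and> v m \<le> 1"
  using v_mono[of 0 m] v_mono[of m K] v0 vK by simp

lemma I_sub: "m < K \<Longrightarrow> I m \<subseteq> {0<..<1}"
  using v_01[of m] v_01[of "Suc m"] by auto

lemma piece_sum:
  assumes B[measurable]: "B \<in> sets borel"
  shows "(\<Sum>m<K. emeasure lborel (I m \<inter> B)) = emeasure lborel ({0<..<1} \<inter> B)"
proof -
  have "k \<le> K \<Longrightarrow> (\<Sum>m<k. emeasure lborel (I m \<inter> B)) = emeasure lborel ({v 0<..<v k} \<inter> B)" for k
  proof (induction k)
    case 0 then show ?case by simp
  next
    case (Suc k)
    then have kK: "k < K" by simp
    have "(\<Sum>m<Suc k. emeasure lborel (I m \<inter> B)) = emeasure lborel ({v 0<..<v k} \<inter> B) + emeasure lborel (I k \<inter> B)"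
      using Suc by simp
    also have "\<dots> = emeasure lborel ({v 0<..<v k} \<inter> B \<union> I k \<inter> B)"
      by (rule plus_emeasure) auto
    also have "\<dots> = emeasure lborel ({v 0<..<v (Suc k)} \<inter> B)"
    proof (rule emeasure_eq_AE)
      have h1: "v 0 \<le> v k" using v_mono[of 0 k] kK by simp
      have h2: "v k < v (Suc k)" using vinc kK by simp
      show "AE x in lborel. (x \<in> {v 0<..<v k} \<inter> B \<union> I k \<inter> B) = (x \<in> {v 0<..<v (Suc k)} \<inter> B)"
        using AE_lborel_singleton[of "v k"] by eventually_elim (use h1 h2 in auto)
    qed auto
    finally show ?case .
  qed
  from this[of K] show ?thesis using v0 vK by simp
qed

lemma T_meas[measurable]: "T \<in> borel_measurable borel"
proof -
  interpret L: real_distribution "law h" by (rule real_distribution_law[OF std])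
  have "cdf (law h) \<in> borel_measurable borel" by (intro borel_measurable_mono monoI L.cdf_nondecreasing)
  then have [measurable]: "unif_dist_fn h \<in> borel_measurable borel" using cdf_law[OF std] by simp
  note [measurable] = trunc_meas[OF std]
  show ?thesis unfolding T_def[abs_def] by measurable
qed

lemma distr_T: "distr unif borel T = unif"
proof -
  interpret L: real_distribution "law h" by (rule real_distribution_law[OF std])
  have cm[measurable]: "cdf (law h) \<in> borel_measurable borel" by (intro borel_measurable_mono monoI L.cdf_nondecreasing)
  note [measurable] = trunc_meas[OF std]
  have "T = cdf (law h) \<circ> trunc h" using cdf_law[OF std] by (auto simp: T_def[abs_def])
  then have "distr unif borel T = distr (distr unif borel (trunc h)) borel (cdf (law h))"
    by (subst distr_distr) auto
  also have "\<dots> = unif" unfolding law_def[symmetric]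
    by (rule cont_cdf_distr[OF real_distribution_law[OF std]]) (rule cont_law[OF std pw])
  finally show ?thesis .
qed

lemma T_on_01: "x \<in> {0..1} \<Longrightarrow> T x = unif_dist_fn h (h x)"
  by (simp add: T_def trunc_eq)

lemma Fh_strict:
  assumes ab: "a < b" and sub: "{a<..<b} \<subseteq> {u\<in>{0..1}. y1 < h u \<and> h u \<le> y2}"
  shows "unif_dist_fn h y1 < unif_dist_fn h y2"
proof -
  note [measurable] = trunc_meas[OF std]
  define S where "S y = {u. trunc h u \<le> y} \<inter> {0..1}" for y
  have S_eq: "S y = {u\<in>{0..1}. h u \<le> y}" for y by (auto simp: S_def trunc_eq)
  have Sm[measurable]: "S y \<in> sets borel" for y unfolding S_def by measurable
  have Sd: "S y2 - S y1 \<in> sets borel" by measurable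
  have Sfin: "emeasure lborel (S y) \<noteq> \<infinity>" for y
  proof -
    have "emeasure lborel (S y) \<le> emeasure lborel {0..1::real}" by (intro emeasure_mono) (auto simp: S_def)
    then show ?thesis by (auto simp: top_unique)
  qed
  obtain u where "a < u" "u < b" using dense[OF ab] by blast
  then have "u \<in> {a<..<b}" by simp
  then have "y1 \<le> y2" using sub by force
  then have S12: "S y1 \<subseteq> S y2" by (auto simp: S_def)
  have "{a<..<b} \<subseteq> S y2 - S y1" using sub by (auto simp: S_eq)
  then have "emeasure lborel {a<..<b} \<le> emeasure lborel (S y2 - S y1)" using Sd by (intro emeasure_mono) auto
  then have e1: "ennreal (b - a) \<le> emeasure lborel (S y2 - S y1)" using ab by simp
  have "emeasure lborel (S y2 - S y1) \<le> emeasure lborel (S y2)" using Sm[of y2] by (intro emeasure_mono) auto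
  then have fin: "emeasure lborel (S y2 - S y1) \<noteq> \<infinity>" using Sfin[of y2] by (auto simp: top_unique)
  have "ennreal (b - a) \<le> ennreal (measure lborel (S y2 - S y1))"
    using e1 fin by (simp add: emeasure_eq_ennreal_measure)
  then have "b - a \<le> measure lborel (S y2 - S y1)" by (simp add: ennreal_le_iff)
  also have "\<dots> = measure lborel (S y2) - measure lborel (S y1)"
    using Sfin S12 by (intro measure_Diff) auto
  finally have "measure lborel (S y1) < measure lborel (S y2)" using ab by simp
  then show ?thesis by (simp add: unif_dist_fn_def S_eq)
qed

lemma T_inc:
  assumes m: "m < K" and inc: "strict_mono_on (I m) h" and x: "x \<in> I m" and y: "y \<in> I m" and xy: "x < y"
  shows "T x < T y"
proof -
  have Im: "I m \<subseteq> {0..1}" using I_sub[OF m] by auto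
  have "unif_dist_fn h (h x) < unif_dist_fn h (h y)"
  proof (rule Fh_strict[OF xy])
    show "{x<..<y} \<subseteq> {u\<in>{0..1}. h x < h u \<and> h u \<le> h y}"
    proof
      fix u assume u: "u \<in> {x<..<y}"
      then have uI: "u \<in> I m" using x y by auto
      have "h x < h u" using inc x uI u unfolding monotone_on_def by auto
      moreover have "h u < h y" using inc y uI u unfolding monotone_on_def by auto
      ultimately show "u \<in> {u\<in>{0..1}. h x < h u \<and> h u \<le> h y}" using uI Im by auto
    qed
  qed
  then show ?thesis using x y Im by (simp add: T_on_01 subset_iff)
qed

lemma T_dec:
  assumes m: "m < K" and dec: "strict_antimono_on (I m) h" and x: "x \<in> I m" and y: "y \<in> I m" and xy: "x < y"
  shows "T y < T x"
proof -
  have Im: "I m \<subseteq> {0..1}" using I_sub[OF m] by auto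
  have "unif_dist_fn h (h y) < unif_dist_fn h (h x)"
  proof (rule Fh_strict[OF xy])
    show "{x<..<y} \<subseteq> {u\<in>{0..1}. h y < h u \<and> h u \<le> h x}"
    proof
      fix u assume u: "u \<in> {x<..<y}"
      then have uI: "u \<in> I m" using x y by auto
      have "h u < h x" using dec x uI u unfolding monotone_on_def by auto
      moreover have "h y < h u" using dec y uI u unfolding monotone_on_def by auto
      ultimately show "u \<in> {u\<in>{0..1}. h y < h u \<and> h u \<le> h x}" using uI Im by auto
    qed
  qed
  then show ?thesis using x y Im by (simp add: T_on_01 subset_iff)
qed

end


context pwh
begin

definition psi :: "nat \<Rightarrow> real \<Rightarrow> real" where
  "psi m w = (if strict_mono_on (I m) h then Sup (insert (v m) {x\<in>I m. T x \<le> w})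
              else Inf (insert (v (Suc m)) {x\<in>I m. T x \<le> w}))"

lemma psi_meas: assumes m: "m < K" shows "psi m \<in> borel_measurable borel"
proof (cases "strict_mono_on (I m) h")
  case True
  have bdd: "bdd_above (insert (v m) {x\<in>I m. T x \<le> w})" for w
    using vinc[OF m] by (intro bdd_aboveI[of _ "v (Suc m)"]) auto
  have "mono (\<lambda>w. Sup (insert (v m) {x\<in>I m. T x \<le> w}))"
    by (intro monoI cSup_subset_mono bdd) auto
  then have "(\<lambda>w. Sup (insert (v m) {x\<in>I m. T x \<le> w})) \<in> borel_measurable borel"
    by (rule borel_measurable_mono)
  then show ?thesis using True by (simp add: psi_def[abs_def])
next
  case False
  have bdd: "bdd_below (insert (v (Suc m)) {x\<in>I m. T x \<le> w})" for w
    using vinc[OF m] by (intro bdd_belowI[of _ "v m"]) auto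
  have "mono (\<lambda>w. - Inf (insert (v (Suc m)) {x\<in>I m. T x \<le> w}))"
    by (intro monoI le_imp_neg_le cInf_superset_mono bdd) auto
  then have "(\<lambda>w. - Inf (insert (v (Suc m)) {x\<in>I m. T x \<le> w})) \<in> borel_measurable borel"
    by (rule borel_measurable_mono)
  then have "(\<lambda>w. - (- Inf (insert (v (Suc m)) {x\<in>I m. T x \<le> w}))) \<in> borel_measurable borel"
    by measurable
  then show ?thesis using False by (simp add: psi_def[abs_def])
qed

lemma psi_T: assumes m: "m < K" and x: "x \<in> I m" shows "psi m (T x) = x"
proof (cases "strict_mono_on (I m) h")
  case True
  have iff: "y \<in> I m \<Longrightarrow> T y \<le> T x \<longleftrightarrow> y \<le> x" for y
    using T_inc[OF m True] x by (metis linorder_not_le order_le_less)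
  have "Sup (insert (v m) {y\<in>I m. T y \<le> T x}) = x"
    by (rule cSup_eq_maximum) (use x iff in auto)
  then show ?thesis using True by (simp add: psi_def)
next
  case False
  then have dec: "strict_antimono_on (I m) h" using smono[OF m] by blast
  have iff: "y \<in> I m \<Longrightarrow> T y \<le> T x \<longleftrightarrow> x \<le> y" for y
    using T_dec[OF m dec] x by (metis linorder_not_le order_le_less)
  have "Inf (insert (v (Suc m)) {y\<in>I m. T y \<le> T x}) = x"
    by (rule cInf_eq_minimum) (use x iff in auto)
  then show ?thesis using False by (simp add: psi_def)
qed

definition mu :: "nat \<Rightarrow> real measure" where
  "mu m = distr (density lborel (indicator (I m))) borel T"

lemma sets_mu[simp, measurable_cong]: "sets (mu m) = sets borel"
  by (simp add: mu_def)

lemma Tvim: "A \<in> sets borel \<Longrightarrow> T -` A \<in> sets borel"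
  using measurable_sets[OF T_meas, of A] by simp

lemma emeasure_mu: "A \<in> sets borel \<Longrightarrow> emeasure (mu m) A = emeasure lborel (I m \<inter> T -` A)"
  unfolding mu_def by (subst emeasure_distr) (auto simp: emeasure_restricted Tvim)

lemma sum_mu: "A \<in> sets borel \<Longrightarrow> (\<Sum>m<K. emeasure (mu m) A) = emeasure unif A"
proof -
  assume A[measurable]: "A \<in> sets borel"
  have "(\<Sum>m<K. emeasure (mu m) A) = (\<Sum>m<K. emeasure lborel (I m \<inter> T -` A))"
    by (simp add: emeasure_mu)
  also have "\<dots> = emeasure lborel ({0<..<1} \<inter> T -` A)"
    by (rule piece_sum) (rule Tvim[OF A])
  also have "\<dots> = emeasure unif (T -` A)"
    by (subst emeasure_unif) (auto simp: Int_commute Tvim)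
  also have "\<dots> = emeasure (distr unif borel T) A" by (subst emeasure_distr) auto
  also have "\<dots> = emeasure unif A" by (simp add: distr_T)
  finally show ?thesis .
qed

lemma mu_le: "A \<in> sets borel \<Longrightarrow> m < K \<Longrightarrow> emeasure (mu m) A \<le> emeasure unif A"
  using sum_mu[of A] member_le_sum[of m "{..<K}" "\<lambda>m. emeasure (mu m) A"] by simp

lemma ac_mu: assumes m: "m < K" shows "absolutely_continuous lborel (mu m)"
  unfolding absolutely_continuous_def
proof
  fix N :: "real set" assume N: "N \<in> null_sets lborel"
  then have Nb: "N \<in> sets borel" by auto
  have "emeasure (mu m) N \<le> emeasure unif N" by (rule mu_le[OF Nb m])
  also have "\<dots> = emeasure lborel (N \<inter> {0<..<1})" using Nb by (simp add: emeasure_unif)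
  also have "\<dots> \<le> emeasure lborel N" using Nb by (intro emeasure_mono) auto
  also have "\<dots> = 0" using N by auto
  finally show "N \<in> null_sets (mu m)" using Nb by (auto intro: null_setsI)
qed

definition p :: "nat \<Rightarrow> real \<Rightarrow> ennreal" where
  "p m = RN_deriv lborel (mu m)"

lemma p_meas[measurable]: "p m \<in> borel_measurable borel"
proof -
  have "RN_deriv lborel (mu m) \<in> borel_measurable lborel" by (rule borel_measurable_RN_deriv)
  then show ?thesis by (simp add: p_def)
qed

lemma density_p: "m < K \<Longrightarrow> density lborel (p m) = mu m"
  unfolding p_def by (rule sigma_finite_measure.density_RN_deriv[OF lborel.sigma_finite_measure_axioms ac_mu]) auto

lemma nn_integral_mu: "m < K \<Longrightarrow> f \<in> borel_measurable borel \<Longrightarrow> integral\<^sup>N (mu m) f = (\<integral>\<^sup>+x. p m x * f x \<partial>lborel)"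
  unfolding p_def
  by (rule sigma_finite_measure.RN_deriv_nn_integral[OF lborel.sigma_finite_measure_axioms ac_mu]) auto

lemma sum_p: "AE x in lborel. (\<Sum>m<K. p m x) = indicator {0<..<1} x"
proof (rule sigma_finite_measure.density_unique2[OF lborel.sigma_finite_measure_axioms])
  show "(\<lambda>x. \<Sum>m<K. p m x) \<in> borel_measurable lborel" by measurable
  show "indicator {0<..<1::real} \<in> borel_measurable lborel" by measurable
  fix A :: "real set" assume A: "A \<in> sets lborel"
  have "(\<integral>\<^sup>+x\<in>A. (\<Sum>m<K. p m x) \<partial>lborel) = (\<integral>\<^sup>+x. (\<Sum>m<K. p m x * indicator A x) \<partial>lborel)"
    by (intro nn_integral_cong) (simp add: sum_distrib_right)
  also have "\<dots> = (\<Sum>m<K. \<integral>\<^sup>+x. p m x * indicator A x \<partial>lborel)"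
    using A by (intro nn_integral_sum) auto
  also have "\<dots> = (\<Sum>m<K. emeasure (mu m) A)"
  proof (intro sum.cong refl)
    fix m assume "m \<in> {..<K}"
    then have m: "m < K" by simp
    have "emeasure (mu m) A = emeasure (density lborel (p m)) A" by (simp add: density_p[OF m])
    also have "\<dots> = (\<integral>\<^sup>+x. p m x * indicator A x \<partial>lborel)" using A by (simp add: emeasure_density mult.commute)
    finally show "(\<integral>\<^sup>+x. p m x * indicator A x \<partial>lborel) = emeasure (mu m) A" by simp
  qed
  also have "\<dots> = emeasure unif A" using A by (simp add: sum_mu)
  also have "\<dots> = emeasure lborel (A \<inter> {0<..<1})" using A by (intro emeasure_unif) simp
  also have "\<dots> = (\<integral>\<^sup>+x. indicator (A \<inter> {0<..<1}) x \<partial>lborel)" using A by (subst nn_integral_indicator) auto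
  also have "\<dots> = (\<integral>\<^sup>+x\<in>A. indicator {0<..<1} x \<partial>lborel)"
    by (intro nn_integral_cong) (auto simp: indicator_def)
  finally show "(\<integral>\<^sup>+x\<in>A. (\<Sum>m<K. p m x) \<partial>lborel) = (\<integral>\<^sup>+x\<in>A. indicator {0<..<1} x \<partial>lborel)" .
qed

end


context pwh
begin

definition P :: "nat \<Rightarrow> real \<Rightarrow> real" where "P m w = enn2real (p m w)"
definition C :: "nat \<Rightarrow> real \<Rightarrow> real" where "C k w = (\<Sum>j<k. P j w)"
definition V0 :: "real \<times> real \<Rightarrow> real" where
  "V0 q = (\<Sum>m<K. if C m (fst q) \<le> snd q \<and> snd q < C (Suc m) (fst q) then psi m (fst q) else 0)"
definition good :: "real \<Rightarrow> bool" where
  "good w \<longleftrightarrow> 0 < w \<and> w < 1 \<and> (\<Sum>m<K. p m w) = 1"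

lemma P_meas[measurable]: "P m \<in> borel_measurable borel"
  unfolding P_def[abs_def] by measurable

lemma C_meas[measurable]: "C k \<in> borel_measurable borel"
  unfolding C_def[abs_def] by measurable

lemma P_nonneg: "0 \<le> P m w" by (simp add: P_def)

lemma C_Suc: "C (Suc k) w = C k w + P k w" by (simp add: C_def)

lemma C_0: "C 0 w = 0" by (simp add: C_def)

lemma C_mono: "k \<le> k' \<Longrightarrow> C k w \<le> C k' w"
  unfolding C_def by (intro sum_mono2) (auto simp: P_nonneg)

lemma V0_meas: "V0 \<in> borel_measurable (borel \<Otimes>\<^sub>M borel)"
  unfolding V0_def[abs_def]
proof (rule borel_measurable_sum)
  fix m assume "m \<in> {..<K}"
  then have [measurable]: "psi m \<in> borel_measurable borel" using psi_meas by simp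
  show "(\<lambda>q. if C m (fst q) \<le> snd q \<and> snd q < C (Suc m) (fst q) then psi m (fst q) else 0)
      \<in> borel_measurable (borel \<Otimes>\<^sub>M borel)" by measurable
qed

lemma V0_sel:
  assumes m: "m < K" and z: "C m w \<le> z" "z < C (Suc m) w"
  shows "V0 (w, z) = psi m w"
proof -
  have "{j\<in>{..<K}. C j w \<le> z \<and> z < C (Suc j) w} = {m}"
  proof safe
    fix j assume j: "j < K" "C j w \<le> z" "z < C (Suc j) w"
    show "j = m"
    proof (rule ccontr)
      assume "j \<noteq> m"
      then consider "j < m" | "m < j" by linarith
      then show False
      proof cases
        case 1 then have "C (Suc j) w \<le> C m w" by (intro C_mono) simp
        then show False using j z by simp
      next
        case 2 then have "C (Suc m) w \<le> C j w" by (intro C_mono) simp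
        then show False using j z by simp
      qed
    qed
  qed (use m z in auto)
  then show ?thesis
    unfolding V0_def by (simp add: sum.inter_filter[symmetric])
qed

lemma p_le_sum: "m < K \<Longrightarrow> p m w \<le> (\<Sum>j<K. p j w)"
  by (rule member_le_sum) auto

lemma good_fin: "good w \<Longrightarrow> m < K \<Longrightarrow> p m w < \<top>"
  using p_le_sum[of m w] by (auto simp: good_def top_unique intro: le_less_trans)

lemma good_p: "good w \<Longrightarrow> m < K \<Longrightarrow> ennreal (P m w) = p m w"
proof -
  assume a: "good w" "m < K"
  show ?thesis using good_fin[OF a] by (simp add: P_def ennreal_enn2real)
qed

lemma good_CK: "good w \<Longrightarrow> C K w = 1"
proof -
  assume g: "good w"
  have "C K w = enn2real (\<Sum>j<K. p j w)"
    unfolding C_def P_def using good_fin[OF g] by (subst enn2real_sum) (auto simp: comp_def)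
  then show ?thesis using g by (simp add: good_def)
qed

lemma sel_exists:
  assumes "0 \<le> z" "z < C k w"
  shows "\<exists>m<k. C m w \<le> z \<and> z < C (Suc m) w"
  using assms
proof (induction k)
  case 0 then show ?case by (simp add: C_0)
next
  case (Suc k)
  show ?case
  proof (cases "z < C k w")
    case True
    then obtain m where "m < k" "C m w \<le> z \<and> z < C (Suc m) w" using Suc.IH Suc.prems(1) by blast
    then show ?thesis by (intro exI[of _ m]) simp
  next
    case False
    then have "C k w \<le> z" by simp
    then show ?thesis using Suc.prems(2) by (intro exI[of _ k]) simp
  qed
qed

lemma AE_lborel_to_unif: "AE x in lborel. Q x \<Longrightarrow> AE x in unif. Q x"
  unfolding unif_def by (subst AE_density) (auto elim!: eventually_mono)

lemma AE_good: "AE w in unif. good w"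
proof -
  have "AE w in unif. (\<Sum>m<K. p m w) = indicator {0<..<1} w" by (rule AE_lborel_to_unif[OF sum_p])
  with AE_unif show ?thesis by eventually_elim (auto simp: good_def)
qed

lemma p_zero_outside: assumes m: "m < K" shows "AE w in lborel. indicator {0<..<1} w * p m w = p m w"
  using sum_p
proof eventually_elim
  case (elim w)
  show ?case
  proof (cases "w \<in> {0<..<1}")
    case True then show ?thesis by simp
  next
    case False
    have "p m w \<le> (\<Sum>j<K. p j w)" by (rule p_le_sum[OF m])
    then have "p m w = 0" using elim False by simp
    then show ?thesis by simp
  qed
qed

end


context pwh
begin

lemma int_p:
  assumes m: "m < K" and F[measurable]: "F \<in> borel_measurable borel"
  shows "(\<integral>\<^sup>+w. p m w * F w \<partial>unif) = (\<integral>\<^sup>+x. indicator (I m) x * F (T x) \<partial>lborel)"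
proof -
  have "(\<integral>\<^sup>+w. p m w * F w \<partial>unif) = (\<integral>\<^sup>+w. indicator {0<..<1} w * (p m w * F w) \<partial>lborel)"
    unfolding unif_def by (subst nn_integral_density) auto
  also have "\<dots> = (\<integral>\<^sup>+w. p m w * F w \<partial>lborel)"
    using p_zero_outside[OF m] by (intro nn_integral_cong_AE) (auto elim!: eventually_mono simp: mult.assoc[symmetric])
  also have "\<dots> = integral\<^sup>N (mu m) F" by (rule nn_integral_mu[OF m F, symmetric])
  also have "\<dots> = (\<integral>\<^sup>+x. F (T x) \<partial>density lborel (indicator (I m)))"
    unfolding mu_def by (subst nn_integral_distr) auto
  also have "\<dots> = (\<integral>\<^sup>+x. indicator (I m) x * F (T x) \<partial>lborel)"
    by (subst nn_integral_density) auto
  finally show ?thesis .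
qed

lemma sel_unique:
  assumes "m < K" "C m w \<le> z" "z < C (Suc m) w" "j < K" "C j w \<le> z" "z < C (Suc j) w"
  shows "j = m"
proof (rule ccontr)
  assume "j \<noteq> m"
  then consider "j < m" | "m < j" by linarith
  then show False
  proof cases
    case 1 then have "C (Suc j) w \<le> C m w" by (intro C_mono) simp
    then show False using assms by simp
  next
    case 2 then have "C (Suc m) w \<le> C j w" by (intro C_mono) simp
    then show False using assms by simp
  qed
qed

lemma emeasure_unif_Ico:
  assumes "0 \<le> a" "a \<le> b" "b \<le> 1"
  shows "emeasure unif {a..<b} = ennreal (b - a)"
proof -
  have "emeasure unif {a..<b} = emeasure lborel ({a..<b} \<inter> {0<..<1})" by (simp add: emeasure_unif)
  also have "\<dots> = emeasure lborel {a..<b}"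
    using AE_lborel_singleton[of 0] assms by (intro emeasure_eq_AE) (auto elim!: eventually_mono)
  also have "\<dots> = ennreal (b - a)" using assms by simp
  finally show ?thesis .
qed

lemma inner_V0:
  assumes g: "good w" and B[measurable]: "B \<in> sets borel"
  shows "(\<integral>\<^sup>+z. indicator B (V0 (w, z)) \<partial>unif) = (\<Sum>m<K. p m w * indicator B (psi m w))"
proof -
  have CK: "C K w = 1" by (rule good_CK[OF g])
  have "(\<integral>\<^sup>+z. indicator B (V0 (w, z)) \<partial>unif)
      = (\<integral>\<^sup>+z. (\<Sum>m<K. indicator B (psi m w) * indicator {C m w..<C (Suc m) w} z) \<partial>unif)"
  proof (rule nn_integral_cong_AE)
    show "AE z in unif. indicator B (V0 (w, z)) = (\<Sum>m<K. indicator B (psi m w) * indicator {C m w..<C (Suc m) w} z :: ennreal)"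
      using AE_unif
    proof eventually_elim
      case (elim z)
      then obtain m where m: "m < K" "C m w \<le> z" "z < C (Suc m) w"
        using sel_exists[of z K w] CK by auto
      have "(\<Sum>j<K. indicator B (psi j w) * indicator {C j w..<C (Suc j) w} z :: ennreal)
          = (\<Sum>j<K. if j = m then indicator B (psi m w) else 0)"
      proof (rule sum.cong[OF refl])
        fix j assume "j \<in> {..<K}"
        then have j: "j < K" by simp
        show "indicator B (psi j w) * indicator {C j w..<C (Suc j) w} z = (if j = m then indicator B (psi m w) else (0::ennreal))"
        proof (cases "C j w \<le> z \<and> z < C (Suc j) w")
          case True
          then have "j = m" using sel_unique[OF m j] by blast
          then show ?thesis using True by simp
        next
          case False
          then have "j \<noteq> m" using m by blast
          then show ?thesis using False by simp
        qed
      qed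
      also have "\<dots> = indicator B (psi m w)" using m(1) by simp
      finally have "(\<Sum>m<K. indicator B (psi m w) * indicator {C m w..<C (Suc m) w} z :: ennreal)
          = indicator B (psi m w)" .
      moreover have "V0 (w, z) = psi m w" by (rule V0_sel[OF m])
      ultimately show ?case by simp
    qed
  qed
  also have "\<dots> = (\<Sum>m<K. indicator B (psi m w) * emeasure unif {C m w..<C (Suc m) w})"
    by (subst nn_integral_sum) (auto simp: nn_integral_cmult_indicator)
  also have "\<dots> = (\<Sum>m<K. p m w * indicator B (psi m w))"
  proof (intro sum.cong refl)
    fix m assume "m \<in> {..<K}"
    then have m: "m < K" by simp
    have "0 \<le> C m w" using C_mono[of 0 m w] by (simp add: C_0)
    moreover have "C m w \<le> C (Suc m) w" by (intro C_mono) simp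
    moreover have "C (Suc m) w \<le> 1" using C_mono[of "Suc m" K w] m CK by simp
    ultimately have "emeasure unif {C m w..<C (Suc m) w} = ennreal (C (Suc m) w - C m w)"
      by (intro emeasure_unif_Ico)
    also have "\<dots> = ennreal (P m w)" by (simp add: C_Suc)
    also have "\<dots> = p m w" by (rule good_p[OF g m])
    finally show "indicator B (psi m w) * emeasure unif {C m w..<C (Suc m) w} = p m w * indicator B (psi m w)"
      by (simp add: mult.commute)
  qed
  finally show ?thesis .
qed

lemma law_V0: "distr (unif \<Otimes>\<^sub>M unif) borel V0 = unif"
proof (rule measure_eqI)
  interpret U: prob_space unif by (rule prob_space_unif)
  have V0m[measurable]: "V0 \<in> borel_measurable (unif \<Otimes>\<^sub>M unif)"
    using V0_meas by (simp add: measurable_cong_sets[OF sets_pair_measure_cong[OF sets_unif sets_unif] refl])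
  show "sets (distr (unif \<Otimes>\<^sub>M unif) borel V0) = sets unif" by simp
  fix B assume "B \<in> sets (distr (unif \<Otimes>\<^sub>M unif) borel V0)"
  then have B[measurable]: "B \<in> sets borel" by simp
  have "emeasure (distr (unif \<Otimes>\<^sub>M unif) borel V0) B = emeasure (unif \<Otimes>\<^sub>M unif) (V0 -` B \<inter> space (unif \<Otimes>\<^sub>M unif))"
    by (rule emeasure_distr) auto
  also have "\<dots> = (\<integral>\<^sup>+w. \<integral>\<^sup>+z. indicator (V0 -` B \<inter> space (unif \<Otimes>\<^sub>M unif)) (w, z) \<partial>unif \<partial>unif)"
    by (rule U.emeasure_pair_measure) measurable
  also have "\<dots> = (\<integral>\<^sup>+w. (\<Sum>m<K. p m w * indicator B (psi m w)) \<partial>unif)"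
  proof (rule nn_integral_cong_AE)
    show "AE w in unif. (\<integral>\<^sup>+z. indicator (V0 -` B \<inter> space (unif \<Otimes>\<^sub>M unif)) (w, z) \<partial>unif) = (\<Sum>m<K. p m w * indicator B (psi m w))"
      using AE_good
    proof eventually_elim
      case (elim w)
      have "(\<integral>\<^sup>+z. indicator (V0 -` B \<inter> space (unif \<Otimes>\<^sub>M unif)) (w, z) \<partial>unif) = (\<integral>\<^sup>+z. indicator B (V0 (w, z)) \<partial>unif)"
        by (intro nn_integral_cong) (auto simp: indicator_def space_pair_measure)
      also have "\<dots> = (\<Sum>m<K. p m w * indicator B (psi m w))" by (rule inner_V0[OF elim B])
      finally show ?case .
    qed
  qed
  also have "\<dots> = (\<Sum>m<K. \<integral>\<^sup>+w. p m w * indicator B (psi m w) \<partial>unif)"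
  proof (rule nn_integral_sum)
    fix m assume "m \<in> {..<K}"
    then have [measurable]: "psi m \<in> borel_measurable borel" using psi_meas by simp
    show "(\<lambda>w. p m w * indicator B (psi m w)) \<in> borel_measurable unif" by measurable
  qed
  also have "\<dots> = (\<Sum>m<K. emeasure lborel (I m \<inter> B))"
  proof (intro sum.cong refl)
    fix m assume "m \<in> {..<K}"
    then have m: "m < K" by simp
    note [measurable] = psi_meas[OF m]
    have "(\<integral>\<^sup>+w. p m w * indicator B (psi m w) \<partial>unif) = (\<integral>\<^sup>+x. indicator (I m) x * indicator B (psi m (T x)) \<partial>lborel)"
      by (rule int_p[OF m, of "\<lambda>w. indicator B (psi m w)"]) measurable
    also have "\<dots> = (\<integral>\<^sup>+x. indicator (I m \<inter> B) x \<partial>lborel)"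
      by (intro nn_integral_cong) (auto simp: indicator_def psi_T[OF m])
    also have "\<dots> = emeasure lborel (I m \<inter> B)" by (subst nn_integral_indicator) auto
    finally show "(\<integral>\<^sup>+w. p m w * indicator B (psi m w) \<partial>unif) = emeasure lborel (I m \<inter> B)" .
  qed
  also have "\<dots> = emeasure lborel ({0<..<1} \<inter> B)" by (rule piece_sum[OF B])
  also have "\<dots> = emeasure unif B" by (simp add: emeasure_unif Int_commute)
  finally show "emeasure (distr (unif \<Otimes>\<^sub>M unif) borel V0) B = emeasure unif B" .
qed

lemma AE_psi: "AE w in unif. \<forall>m\<in>{..<K}. 0 < p m w \<longrightarrow> T (psi m w) = w"
proof (subst AE_ball_countable)
  show "countable {..<K}" by simp
  show "\<forall>m\<in>{..<K}. AE w in unif. 0 < p m w \<longrightarrow> T (psi m w) = w"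
  proof
    fix m assume "m \<in> {..<K}"
    then have m: "m < K" by simp
    note [measurable] = psi_meas[OF m]
    have "(\<integral>\<^sup>+w. p m w * indicator {w. T (psi m w) \<noteq> w} w \<partial>unif)
        = (\<integral>\<^sup>+x. indicator (I m) x * indicator {w. T (psi m w) \<noteq> w} (T x) \<partial>lborel)"
      by (rule int_p[OF m]) measurable
    also have "\<dots> = (\<integral>\<^sup>+(x::real). 0 \<partial>lborel)"
    proof -
      have eq: "(\<lambda>x. indicator (I m) x * indicator {w. T (psi m w) \<noteq> w} (T x)) = (\<lambda>x. 0::ennreal)"
        by (rule ext) (auto simp: indicator_def psi_T[OF m])
      show ?thesis by (simp only: eq)
    qed
    finally have "(\<integral>\<^sup>+w. p m w * indicator {w. T (psi m w) \<noteq> w} w \<partial>unif) = 0" by simp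
    then have "AE w in unif. p m w * indicator {w. T (psi m w) \<noteq> w} w = 0"
      by (subst (asm) nn_integral_0_iff_AE) measurable
    then show "AE w in unif. 0 < p m w \<longrightarrow> T (psi m w) = w"
      by eventually_elim (auto simp: indicator_def split: if_splits)
  qed
qed

lemma AE_V0: "AE q in unif \<Otimes>\<^sub>M unif. T (V0 q) = fst q"
proof -
  interpret U: prob_space unif by (rule prob_space_unif)
  interpret pair_sigma_finite unif unif
    by (intro pair_sigma_finite.intro) (auto intro: U.sigma_finite_measure_axioms)
  have V0m[measurable]: "V0 \<in> borel_measurable (unif \<Otimes>\<^sub>M unif)"
    using V0_meas by (simp add: measurable_cong_sets[OF sets_pair_measure_cong[OF sets_unif sets_unif] refl])
  show ?thesis
  proof (rule AE_pair_measure)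
    show "{x \<in> space (unif \<Otimes>\<^sub>M unif). T (V0 x) = fst x} \<in> sets (unif \<Otimes>\<^sub>M unif)" by measurable
    show "AE w in unif. AE z in unif. T (V0 (w, z)) = fst (w, z)"
      using AE_good AE_psi
    proof eventually_elim
      case (elim w)
      show ?case using AE_unif
      proof eventually_elim
        case (elim z)
        obtain m where m: "m < K" "C m w \<le> z" "z < C (Suc m) w"
          using sel_exists[of z K w] good_CK[OF \<open>good w\<close>] elim by auto
        have "0 < P m w" using m(2,3) by (simp add: C_Suc)
        then have "0 < p m w" using good_p[OF \<open>good w\<close> m(1)] by (metis ennreal_less_zero_iff)
        then have "T (psi m w) = w" using \<open>\<forall>m\<in>{..<K}. 0 < p m w \<longrightarrow> T (psi m w) = w\<close> m(1) by blast
        then show ?case using V0_sel[OF m] by simp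
      qed
    qed
  qed
qed

end

lemma fst_borel[measurable]: "fst \<in> borel_measurable (borel :: (real \<times> real) measure)"
  using measurable_fst[of "borel::real measure" "borel::real measure"] by (simp add: borel_prod)

lemma snd_borel[measurable]: "snd \<in> borel_measurable (borel :: (real \<times> real) measure)"
  using measurable_snd[of "borel::real measure" "borel::real measure"] by (simp add: borel_prod)

context pwh
begin

lemma coupling:
  assumes Rm[measurable]: "R \<in> borel_measurable borel" and dR: "distr unif borel R = unif"
  shows "\<exists>M::(real \<times> real) measure. prob_space M \<and> sets M = sets borel \<and>
           distr M borel fst = unif \<and> distr M borel snd = unif \<and> (AE q in M. T (snd q) = R (fst q))"
proof -
  interpret U: prob_space unif by (rule prob_space_unif)
  interpret UU: pair_prob_space unif unif by unfold_locales
  have V0m[measurable]: "V0 \<in> borel_measurable (borel \<Otimes>\<^sub>M borel)" by (rule V0_meas)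
  define \<rho> where "\<rho> = (\<lambda>(x::real, y::real). (R x, y))"
  have \<rho>m[measurable]: "\<rho> \<in> measurable (unif \<Otimes>\<^sub>M unif) (borel \<Otimes>\<^sub>M borel)"
    unfolding \<rho>_def by measurable
  have d\<rho>: "distr (unif \<Otimes>\<^sub>M unif) (borel \<Otimes>\<^sub>M borel) \<rho> = unif \<Otimes>\<^sub>M unif"
  proof -
    have "distr unif borel R \<Otimes>\<^sub>M distr unif borel (\<lambda>x. x) = distr (unif \<Otimes>\<^sub>M unif) (borel \<Otimes>\<^sub>M borel) (\<lambda>(x, y). (R x, y))"
      by (rule pair_measure_distr) (auto simp: distr_id2 U.sigma_finite_measure_axioms)
    moreover have "distr unif borel (\<lambda>x. x) = unif" by (rule distr_id2) simp
    ultimately show ?thesis using dR by (simp add: \<rho>_def)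
  qed
  define \<Phi> where "\<Phi> = (\<lambda>q::real \<times> real. (fst q, V0 (\<rho> q)))"
  have \<Phi>m': "\<Phi> \<in> measurable (unif \<Otimes>\<^sub>M unif) (borel \<Otimes>\<^sub>M borel)"
    unfolding \<Phi>_def by measurable
  then have \<Phi>m[measurable]: "\<Phi> \<in> measurable (unif \<Otimes>\<^sub>M unif) borel"
  proof -
    have se: "sets (borel \<Otimes>\<^sub>M borel :: (real \<times> real) measure) = sets borel" by (metis borel_prod)
    have "measurable (unif \<Otimes>\<^sub>M unif) (borel \<Otimes>\<^sub>M borel) = measurable (unif \<Otimes>\<^sub>M unif) (borel :: (real \<times> real) measure)"
      by (rule measurable_cong_sets[OF refl se])
    then show ?thesis using \<Phi>m' by (metis (no_types))
  qed
  define M where "M = distr (unif \<Otimes>\<^sub>M unif) borel \<Phi>"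
  have "prob_space M" unfolding M_def by (rule UU.prob_space_distr[OF \<Phi>m])
  moreover have "sets M = sets borel" by (simp add: M_def)
  moreover have "distr M borel fst = unif"
  proof -
    have "distr M borel fst = distr (unif \<Otimes>\<^sub>M unif) borel (fst \<circ> \<Phi>)"
      unfolding M_def by (rule distr_distr) auto
    also have "\<dots> = distr (unif \<Otimes>\<^sub>M unif) unif fst"
      by (rule distr_cong) (auto simp: \<Phi>_def)
    also have "\<dots> = unif" by (rule U.distr_pair_fst)
    finally show ?thesis .
  qed
  moreover have "distr M borel snd = unif"
  proof -
    have "distr M borel snd = distr (unif \<Otimes>\<^sub>M unif) borel (snd \<circ> \<Phi>)"
      unfolding M_def by (rule distr_distr) auto
    also have "\<dots> = distr (unif \<Otimes>\<^sub>M unif) borel (V0 \<circ> \<rho>)"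
      by (rule distr_cong) (auto simp: \<Phi>_def)
    also have "\<dots> = distr (distr (unif \<Otimes>\<^sub>M unif) (borel \<Otimes>\<^sub>M borel) \<rho>) borel V0"
      by (rule distr_distr[symmetric]) auto
    also have "\<dots> = distr (unif \<Otimes>\<^sub>M unif) borel V0" by (simp add: d\<rho>)
    also have "\<dots> = unif" by (rule law_V0)
    finally show ?thesis .
  qed
  moreover have "AE q in M. T (snd q) = R (fst q)"
  proof -
    have "AE q in distr (unif \<Otimes>\<^sub>M unif) (borel \<Otimes>\<^sub>M borel) \<rho>. T (V0 q) = fst q"
      unfolding d\<rho> by (rule AE_V0)
    then have ae: "AE q in unif \<Otimes>\<^sub>M unif. T (V0 (\<rho> q)) = fst (\<rho> q)"
      by (subst (asm) AE_distr_iff) auto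
    have "AE q in unif \<Otimes>\<^sub>M unif. T (snd (\<Phi> q)) = R (fst (\<Phi> q))"
      using ae by eventually_elim (auto simp: \<Phi>_def \<rho>_def split: prod.splits)
    then show ?thesis unfolding M_def by (subst AE_distr_iff) auto
  qed
  ultimately show ?thesis by blast
qed

end

lemma unif_marg:
  assumes M: "prob_space M" and Z[measurable]: "Z \<in> borel_measurable M" and dZ: "distr M borel Z = unif"
  shows "continuous_rv M Z" "\<And>x. x \<in> {0..1} \<Longrightarrow> dist_fn M Z x = x"
proof -
  have F: "dist_fn M Z = (\<lambda>x. max 0 (min 1 x))" by (simp add: dist_fn_def dZ cdf_unif[abs_def])
  have "isCont (\<lambda>x::real. max 0 (min 1 x)) x" for x by (intro continuous_intros)
  then show "continuous_rv M Z" by (simp add: continuous_rv_def F)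
  show "\<And>x. x \<in> {0..1} \<Longrightarrow> dist_fn M Z x = x" by (simp add: F)
qed


lemma exist_helper:
  assumes M0: "prob_space M0" and s: "sets M0 = sets borel"
    and d1: "distr M0 borel fst = unif" and d2: "distr M0 borel snd = unif"
  shows "continuous_rv M0 fst" "continuous_rv M0 snd"
    "AE q in M0. dist_fn M0 fst (fst q) = fst q \<and> dist_fn M0 snd (snd q) = snd q \<and>
        0 < fst q \<and> fst q < 1 \<and> 0 < snd q \<and> snd q < 1"
proof -
  have mc: "measurable M0 (borel::real measure) = measurable borel borel"
    by (rule measurable_cong_sets[OF s refl])
  have f[measurable]: "fst \<in> borel_measurable M0" using fst_borel mc by simp
  have g[measurable]: "snd \<in> borel_measurable M0" using snd_borel mc by simp
  note U1 = unif_marg[OF M0 f d1] and U2 = unif_marg[OF M0 g d2]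
  show "continuous_rv M0 fst" by (rule U1(1))
  show "continuous_rv M0 snd" by (rule U2(1))
  show "AE q in M0. dist_fn M0 fst (fst q) = fst q \<and> dist_fn M0 snd (snd q) = snd q \<and>
        0 < fst q \<and> fst q < 1 \<and> 0 < snd q \<and> snd q < 1"
    using AE_W01[OF M0 f d1] AE_W01[OF M0 g d2]
    by eventually_elim (auto simp: U1(2) U2(2))
qed

theorem theorem1:
  fixes g h :: "real \<Rightarrow> real"
  assumes "standardized g" and "standardized h"
    and "pw_cont_strict_mono g" and "pw_cont_strict_mono h"
  defines "Fg \<equiv> unif_dist_fn g" and "Fh \<equiv> unif_dist_fn h"
  defines "Tg \<equiv> Fg \<circ> g" and "Th \<equiv> Fh \<circ> h"
  defines "rho_max \<equiv> LINT u:{0..1}|lborel. gen_inv Fg u * gen_inv Fh u"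
    and "rho_min \<equiv> LINT u:{0..1}|lborel. gen_inv Fg u * gen_inv Fh (1 - u)"
  shows
    \<comment> \<open>(a) upper bound, attained when T_g(U) = T_h(V) a.s.\<close>
    "(\<forall>(M::'a measure) X Y. prob_space M \<and> continuous_rv M X \<and> continuous_rv M Y \<longrightarrow>
        gen_spearman g h M X Y \<le> rho_max)
     \<and> (\<forall>(M::'a measure) X Y. prob_space M \<and> continuous_rv M X \<and> continuous_rv M Y \<and>
        (AE w in M. Tg (dist_fn M X (X w)) = Th (dist_fn M Y (Y w))) \<longrightarrow>
        gen_spearman g h M X Y = rho_max)
     \<and> (\<exists>M::(real \<times> real) measure. prob_space M \<and> sets M = sets borel \<and>
        continuous_rv M fst \<and> continuous_rv M snd \<and>
        (AE w in M. Tg (dist_fn M fst (fst w)) = Th (dist_fn M snd (snd w))) \<and>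
        gen_spearman g h M fst snd = rho_max)
     \<comment> \<open>(b) lower bound, attained when T_g(U) = 1 - T_h(V) a.s.\<close>
     \<and> (\<forall>(M::'a measure) X Y. prob_space M \<and> continuous_rv M X \<and> continuous_rv M Y \<longrightarrow>
        rho_min \<le> gen_spearman g h M X Y)
     \<and> (\<forall>(M::'a measure) X Y. prob_space M \<and> continuous_rv M X \<and> continuous_rv M Y \<and>
        (AE w in M. Tg (dist_fn M X (X w)) = 1 - Th (dist_fn M Y (Y w))) \<longrightarrow>
        gen_spearman g h M X Y = rho_min)
     \<and> (\<exists>M::(real \<times> real) measure. prob_space M \<and> sets M = sets borel \<and>
        continuous_rv M fst \<and> continuous_rv M snd \<and>
        (AE w in M. Tg (dist_fn M fst (fst w)) = 1 - Th (dist_fn M snd (snd w))) \<and>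
        gen_spearman g h M fst snd = rho_min)
     \<comment> \<open>(c)\<close>
     \<and> (Fg = Fh \<longrightarrow> rho_max = 1)
     \<and> ((\<forall>u\<in>{0<..<1}. gen_inv Fh (1 - u) = - gen_inv Fg u) \<longrightarrow> rho_min = -1)"
proof -
  have g: "standardized g" "pw_cont_strict_mono g" using assms(1,3) by auto
  have h: "standardized h" "pw_cont_strict_mono h" using assms(2,4) by auto
  obtain Kg ug where Gp: "ug 0 = 0" "ug Kg = 1" "\<forall>m<Kg. ug m < ug (Suc m)"
    "\<forall>m<Kg. continuous_on {ug m<..<ug (Suc m)} g \<and>
       (strict_mono_on {ug m<..<ug (Suc m)} g \<or> strict_antimono_on {ug m<..<ug (Suc m)} g)"
    using g(2) unfolding pw_cont_strict_mono_def by blast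
  obtain Kh uh where Hp: "uh 0 = 0" "uh Kh = 1" "\<forall>m<Kh. uh m < uh (Suc m)"
    "\<forall>m<Kh. continuous_on {uh m<..<uh (Suc m)} h \<and>
       (strict_mono_on {uh m<..<uh (Suc m)} h \<or> strict_antimono_on {uh m<..<uh (Suc m)} h)"
    using h(2) unfolding pw_cont_strict_mono_def by blast
  interpret G: pwh g Kg ug by unfold_locales (use g Gp in auto)
  interpret H: pwh h Kh uh by unfold_locales (use h Hp in auto)
  have GTu: "distr unif borel G.T = unif" by (rule G.distr_T)
  have GTm: "G.T \<in> borel_measurable borel" by (rule G.T_meas)
  have e1: "\<exists>M::(real \<times> real) measure. prob_space M \<and> sets M = sets borel \<and>
        continuous_rv M fst \<and> continuous_rv M snd \<and>
        (AE w in M. Tg (dist_fn M fst (fst w)) = Th (dist_fn M snd (snd w))) \<and>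
        gen_spearman g h M fst snd = rho_max"
  proof -
    obtain M0 :: "(real \<times> real) measure" where M0: "prob_space M0" "sets M0 = sets borel"
      "distr M0 borel fst = unif" "distr M0 borel snd = unif" "AE q in M0. H.T (snd q) = G.T (fst q)"
      using H.coupling[OF GTm GTu] by blast
    note E = exist_helper[OF M0(1-4)]
    have ae: "AE w in M0. unif_dist_fn g (g (dist_fn M0 fst (fst w))) = unif_dist_fn h (h (dist_fn M0 snd (snd w)))"
      using E(3) M0(5) by eventually_elim (auto simp: G.T_on_01 H.T_on_01)
    have "gen_spearman g h M0 fst snd = rho_max"
      unfolding rho_max_def Fg_def Fh_def by (rule upper_attained[OF g h M0(1) E(1,2) ae])
    moreover have "AE w in M0. Tg (dist_fn M0 fst (fst w)) = Th (dist_fn M0 snd (snd w))"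
      using ae by (simp add: Tg_def Th_def Fg_def Fh_def)
    ultimately show ?thesis using M0(1,2) E(1,2) by blast
  qed
  have e2: "\<exists>M::(real \<times> real) measure. prob_space M \<and> sets M = sets borel \<and>
        continuous_rv M fst \<and> continuous_rv M snd \<and>
        (AE w in M. Tg (dist_fn M fst (fst w)) = 1 - Th (dist_fn M snd (snd w))) \<and>
        gen_spearman g h M fst snd = rho_min"
  proof -
    have Rm: "(\<lambda>x. 1 - G.T x) \<in> borel_measurable borel" using GTm by measurable
    have GTm': "G.T \<in> borel_measurable unif" using GTm by (simp add: measurable_cong_sets[OF sets_unif refl])
    have Ru: "distr unif borel (\<lambda>x. 1 - G.T x) = unif" by (rule W_refl[OF GTm' GTu])
    obtain M0 :: "(real \<times> real) measure" where M0: "prob_space M0" "sets M0 = sets borel"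
      "distr M0 borel fst = unif" "distr M0 borel snd = unif" "AE q in M0. H.T (snd q) = 1 - G.T (fst q)"
      using H.coupling[OF Rm Ru] by blast
    note E = exist_helper[OF M0(1-4)]
    have ae: "AE w in M0. unif_dist_fn g (g (dist_fn M0 fst (fst w))) = 1 - unif_dist_fn h (h (dist_fn M0 snd (snd w)))"
      using E(3) M0(5) by eventually_elim (auto simp: G.T_on_01 H.T_on_01)
    have "gen_spearman g h M0 fst snd = rho_min"
      unfolding rho_min_def Fg_def Fh_def by (rule lower_attained[OF g h M0(1) E(1,2) ae])
    moreover have "AE w in M0. Tg (dist_fn M0 fst (fst w)) = 1 - Th (dist_fn M0 snd (snd w))"
      using ae by (simp add: Tg_def Th_def Fg_def Fh_def)
    ultimately show ?thesis using M0(1,2) E(1,2) by blast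
  qed
  show ?thesis
  proof (intro conjI)
    show "\<forall>(M::'a measure) X Y. prob_space M \<and> continuous_rv M X \<and> continuous_rv M Y \<longrightarrow>
        gen_spearman g h M X Y \<le> rho_max"
      unfolding rho_max_def Fg_def Fh_def using upper_bound[OF g h] by blast
    show "\<forall>(M::'a measure) X Y. prob_space M \<and> continuous_rv M X \<and> continuous_rv M Y \<and>
        (AE w in M. Tg (dist_fn M X (X w)) = Th (dist_fn M Y (Y w))) \<longrightarrow>
        gen_spearman g h M X Y = rho_max"
      unfolding rho_max_def Fg_def Fh_def Tg_def Th_def comp_def using upper_attained[OF g h] by blast
    show "\<forall>(M::'a measure) X Y. prob_space M \<and> continuous_rv M X \<and> continuous_rv M Y \<longrightarrow>
        rho_min \<le> gen_spearman g h M X Y"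
      unfolding rho_min_def Fg_def Fh_def using lower_bound[OF g h] by blast
    show "\<forall>(M::'a measure) X Y. prob_space M \<and> continuous_rv M X \<and> continuous_rv M Y \<and>
        (AE w in M. Tg (dist_fn M X (X w)) = 1 - Th (dist_fn M Y (Y w))) \<longrightarrow>
        gen_spearman g h M X Y = rho_min"
      unfolding rho_min_def Fg_def Fh_def Tg_def Th_def comp_def using lower_attained[OF g h] by blast
    show "Fg = Fh \<longrightarrow> rho_max = 1"
      unfolding rho_max_def Fg_def Fh_def using part_c1[OF g h] by blast
    show "(\<forall>u\<in>{0<..<1}. gen_inv Fh (1 - u) = - gen_inv Fg u) \<longrightarrow> rho_min = -1"
      unfolding rho_min_def Fg_def Fh_def using part_c2[OF g h] by blast
  qed (rule e1, rule e2)
qed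

end
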